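(* Let $d,N_0\in\mathbb{N}$, $B>0$, $a\ge0$, and let $\varrho_a:\mathbb{R}\to\mathbb{R}$, $x\mapsto\max\{x,ax\}$ be the parametric ReLU. Then $\mathcal{RNN}_{\varrho_a}^{[-B,B]^d}((d,N_0,1))$ is closed in $C([-B,B]^d)$ (with the supremum norm).
   Context: $\mathcal{RNN}_{\varrho_a}^{[-B,B]^d}((d,N_0,1))$ is the set of all functions $[-B,B]^d\to\mathbb{R}$ of the form $x\mapsto A_2\varrho_a(A_1x+b_1)+b_2$ with $A_1\in\mathbb{R}^{N_0\times d}$, $b_1\in\mathbb{R}^{N_0}$, $A_2\in\mathbb{R}^{1\times N_0}$, $b_2\in\mathbb{R}$, where $\varrho_a$ acts componentwise. *)

theory Defs
  imports "HOL-Analysis.Analysis"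
begin

definition pReLU :: "real \<Rightarrow> real \<Rightarrow> real" where
  "pReLU a x = max x (a * x)"

text \<open>The cube [-B,B]^d, with the dimension d given by the finite index type 'd.\<close>
definition cube :: "real \<Rightarrow> (real ^ 'd) set" where
  "cube B = {x. \<forall>i. - B \<le> x $ i \<and> x $ i \<le> B}"

text \<open>Shallow networks with architecture (d, N0, 1) restricted to the cube:
  functions that agree on the cube with x \<mapsto> A2 rho_a(A1 x + b1) + b2.\<close>
definition RNN_shallow :: "real \<Rightarrow> nat \<Rightarrow> real \<Rightarrow> ((real ^ 'd) \<Rightarrow> real) set" where
  "RNN_shallow a N0 B =
     {f. \<exists>(A1 :: nat \<Rightarrow> real ^ 'd) (b1 :: nat \<Rightarrow> real) (A2 :: nat \<Rightarrow> real) (b2 :: real).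
          \<forall>x \<in> cube B. f x = (\<Sum>j<N0. A2 j * pReLU a (A1 j \<bullet> x + b1 j)) + b2}"

end

theory Submission
  imports Defs
begin

definition relu :: "real \<Rightarrow> real" where "relu x = max 0 x"

lemma pReLU_decomp: "a \<ge> 0 \<Longrightarrow> pReLU a y = min 1 a * y + \<bar>1 - a\<bar> * relu y"
proof -
  assume a: "a \<ge> 0"
  show ?thesis
  proof (cases "a \<le> 1")
    case True
    show ?thesis
    proof (cases "y \<ge> 0")
      case True
      have "a*y \<le> 1*y" using \<open>a \<le> 1\<close> True by (intro mult_right_mono) auto
      then show ?thesis using True \<open>a \<le> 1\<close> unfolding pReLU_def relu_def by (simp add: algebra_simps)
    next
      case False
      have "1*y \<le> a*y" using \<open>a \<le> 1\<close> False by (intro mult_right_mono_neg) auto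
      then show ?thesis using False \<open>a \<le> 1\<close> unfolding pReLU_def relu_def by (simp add: algebra_simps)
    qed
  next
    case False
    show ?thesis
    proof (cases "y \<ge> 0")
      case True
      have "1*y \<le> a*y" using False True by (intro mult_right_mono) auto
      then show ?thesis using True False unfolding pReLU_def relu_def by (simp add: algebra_simps)
    next
      case F2: False
      have "a*y \<le> 1*y" using False F2 by (intro mult_right_mono_neg) auto
      then show ?thesis using False F2 unfolding pReLU_def relu_def by (simp add: algebra_simps)
    qed
  qed
qed

lemma pReLU_hom: "t \<ge> 0 \<Longrightarrow> pReLU a (t*y) = t * pReLU a y"
  unfolding pReLU_def by (simp add: max_mult_distrib_left algebra_simps)

lemma relu_neg: "relu (-t) = relu t - t" unfolding relu_def by auto

lemma relu_seg:
  fixes P Q s :: real assumes "P*Q < 0"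
  shows "relu((1-s)*P + s*Q) = \<bar>Q-P\<bar> * relu(s - P/(P-Q)) + (if P > 0 then (1-s)*P + s*Q else 0)"
proof -
  have PQ: "P - Q \<noteq> 0" using assms by auto
  define t where "t = s - P/(P-Q)"
  have y: "(1-s)*P + s*Q = (Q-P)*t" using PQ unfolding t_def by (simp add: field_simps)
  show ?thesis
  proof (cases "P > 0")
    case True
    then have "Q < 0" using assms by (simp add: mult_less_0_iff)
    then have "Q - P < 0" using True by simp
    then have "relu ((Q-P)*t) = (P-Q) * relu t + (Q-P)*t"
    proof (cases "t \<ge> 0")
      case True
      then have "(Q-P)*t \<le> 0" using \<open>Q - P < 0\<close> by (simp add: mult_nonpos_nonneg)
      then show ?thesis using True unfolding relu_def by (simp add: algebra_simps)
    next
      case False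
      then have "(Q-P)*t \<ge> 0" using \<open>Q - P < 0\<close> by (simp add: mult_nonpos_nonpos)
      then show ?thesis using False unfolding relu_def by simp
    qed
    then show ?thesis unfolding y t_def[symmetric] using True \<open>Q - P < 0\<close> by simp
  next
    case False
    then have "P < 0" "Q > 0" using assms by (auto simp: mult_less_0_iff)
    then have "relu ((Q-P)*t) = (Q-P) * relu t"
      unfolding relu_def by (cases "t \<ge> 0") (auto simp: max_def mult_le_0_iff zero_le_mult_iff)
    then show ?thesis unfolding y t_def[symmetric] using False \<open>P < 0\<close> \<open>Q > 0\<close> by simp
  qed
qed

lemma relu_seg2:
  fixes P Q s :: real assumes "P*Q \<ge> 0" "0 \<le> s" "s \<le> 1"
  shows "relu((1-s)*P + s*Q) = (1-s)*relu P + s*relu Q"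
proof -
  have "(P \<ge> 0 \<and> Q \<ge> 0) \<or> (P \<le> 0 \<and> Q \<le> 0)" using assms(1) by (auto simp: zero_le_mult_iff)
  then show ?thesis
  proof
    assume "P \<ge> 0 \<and> Q \<ge> 0" then show ?thesis using assms unfolding relu_def by (simp add: max_def)
  next
    assume h: "P \<le> 0 \<and> Q \<le> 0"
    have "(1-s)*P \<le> 0" "s*Q \<le> 0" using h assms by (auto simp: mult_nonneg_nonpos)
    then have "(1-s)*P + s*Q \<le> 0" by simp
    then show ?thesis using h unfolding relu_def by (simp add: max_absorb1)
  qed
qed


lemma cont_interval_eq:
  fixes f :: "real \<Rightarrow> real"
  assumes cont: "continuous_on {0..1} f" and lh: "lo < hi" and sub: "0 \<le> lo" "hi \<le> 1"
    and z: "z = lo \<or> z = hi" and eq: "\<And>t. lo < t \<Longrightarrow> t < hi \<Longrightarrow> f t = c + d*t"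
  shows "f z = c + d*z"
proof -
  have zin: "z \<in> {0..1}" using z sub lh by auto
  have "(f \<longlongrightarrow> f z) (at z within {0..1})" using cont zin by (simp add: continuous_on_def)
  then have "(f \<longlongrightarrow> f z) (at z within {lo<..<hi})"
    by (rule tendsto_within_subset) (use sub in auto)
  moreover have "eventually (\<lambda>t. f t = c + d*t) (at z within {lo<..<hi})"
    using eq by (auto simp: eventually_at_filter)
  ultimately have 1: "((\<lambda>t. c + d*t) \<longlongrightarrow> f z) (at z within {lo<..<hi})"
    by (rule Lim_transform_eventually)
  have 2: "((\<lambda>t. c + d*t) \<longlongrightarrow> c + d*z) (at z within {lo<..<hi})"
    by (intro tendsto_intros)
  have "z islimpt {lo<..<hi}" using z lh islimpt_greaterThanLessThan1 islimpt_greaterThanLessThan2 by blast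
  then have "\<not> trivial_limit (at z within {lo<..<hi})" by (simp add: trivial_limit_within)
  from tendsto_unique[OF this 1 2] show ?thesis .
qed

lemma oneD:
  fixes J :: "nat set" and w r :: "nat \<Rightarrow> nat \<Rightarrow> real" and sh :: "nat \<Rightarrow> real"
    and phi :: "nat \<Rightarrow> real \<Rightarrow> real" and ph :: "real \<Rightarrow> real" and X Y :: "nat \<Rightarrow> real"
  assumes J: "finite J"
    and rconv: "\<And>j. j\<in>J \<Longrightarrow> (\<lambda>n. r n j) \<longlonglongrightarrow> sh j"
    and sh01: "\<And>j. j\<in>J \<Longrightarrow> 0 < sh j \<and> sh j < 1"
    and conv: "\<And>s. s\<in>{0..1} \<Longrightarrow> (\<lambda>n. phi n s) \<longlonglongrightarrow> ph s"
    and cont: "continuous_on {0..1} ph"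
    and aff: "eventually (\<lambda>n. \<forall>s\<in>{0..1}. phi n s = X n + Y n * s + (\<Sum>j\<in>J. w n j * relu (s - r n j))) sequentially"
  shows "\<exists>\<kappa>. (\<forall>z. (\<lambda>n. \<Sum>j\<in>{j\<in>J. sh j = z}. w n j) \<longlonglongrightarrow> \<kappa> z \<and>
                 (\<lambda>n. \<Sum>j\<in>{j\<in>J. sh j = z}. w n j * r n j) \<longlonglongrightarrow> \<kappa> z * z) \<and>
             (\<exists>A B. \<forall>s\<in>{0..1}. ph s = A + B * s + (\<Sum>z\<in>sh`J. \<kappa> z * relu(s - z)))"
proof -
  define Z where "Z = sh ` J"
  have Zf: "finite Z" using J Z_def by simp
  have Z01: "\<And>z. z \<in> Z \<Longrightarrow> 0 < z \<and> z < 1" using sh01 Z_def by auto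
  define LS where "LS s = {j\<in>J. sh j < s}" for s
  define Om where "Om n s = (\<Sum>j\<in>LS s. w n j)" for n s
  define Pn where "Pn n s = (\<Sum>j\<in>LS s. w n j * r n j)" for n s
  have LSf: "finite (LS s)" for s using J by (simp add: LS_def)
  have F1: "eventually (\<lambda>n. phi n s = X n + Y n * s + Om n s * s - Pn n s) sequentially"
    if s: "s \<in> {0..1}" "s \<notin> Z" for s
  proof -
    have "\<forall>j\<in>J. eventually (\<lambda>n. (sh j < s \<longrightarrow> r n j < s) \<and> (sh j > s \<longrightarrow> r n j > s)) sequentially"
    proof
      fix j assume j: "j \<in> J"
      have "sh j \<noteq> s" using s j Z_def by auto
      show "eventually (\<lambda>n. (sh j < s \<longrightarrow> r n j < s) \<and> (sh j > s \<longrightarrow> r n j > s)) sequentially"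
      proof (cases "sh j < s")
        case True
        have "eventually (\<lambda>n. r n j < s) sequentially" using order_tendstoD(2)[OF rconv[OF j] True] .
        then show ?thesis by eventually_elim (use True in auto)
      next
        case False
        then have "sh j > s" using \<open>sh j \<noteq> s\<close> by simp
        have "eventually (\<lambda>n. r n j > s) sequentially" using order_tendstoD(1)[OF rconv[OF j] \<open>sh j > s\<close>] .
        then show ?thesis by eventually_elim (use False in auto)
      qed
    qed
    then have ev: "eventually (\<lambda>n. \<forall>j\<in>J. (sh j < s \<longrightarrow> r n j < s) \<and> (sh j > s \<longrightarrow> r n j > s)) sequentially"
      by (rule eventually_ball_finite[OF J])
    show ?thesis using ev aff
    proof eventually_elim
      case (elim n)
      have "(\<Sum>j\<in>J. w n j * relu (s - r n j)) = (\<Sum>j\<in>J. if sh j < s then w n j * (s - r n j) else 0)"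
      proof (rule sum.cong)
        fix j assume j: "j \<in> J"
        have "sh j \<noteq> s" using s j Z_def by auto
        then show "w n j * relu (s - r n j) = (if sh j < s then w n j * (s - r n j) else 0)"
          using elim(1) j unfolding relu_def by (cases "sh j < s") auto
      qed simp
      also have "\<dots> = (\<Sum>j\<in>LS s. w n j * (s - r n j))"
        by (simp add: sum.inter_filter[symmetric] LS_def J)
      also have "\<dots> = Om n s * s - Pn n s"
        unfolding Om_def Pn_def sum_distrib_right sum_subtractf[symmetric]
        by (rule sum.cong) (simp_all add: algebra_simps)
      finally show ?case using elim(2) s by auto
    qed
  qed
  have F2: "\<exists>s'. s' \<in> {0..1} \<and> s' \<notin> Z \<and> s' \<noteq> s \<and> LS s' = LS s" if s: "s \<in> {0..1}" "s \<notin> Z" for s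
  proof -
    obtain \<delta> where \<delta>: "\<delta> > 0" "\<forall>x\<in>Z. x \<noteq> s \<longrightarrow> \<delta> \<le> dist s x" using finite_set_avoid[OF Zf] by blast
    define \<delta>' where "\<delta>' = min \<delta> (1/2)"
    have d': "0 < \<delta>'" "\<delta>' \<le> \<delta>" "\<delta>' \<le> 1/2" using \<delta> by (auto simp: \<delta>'_def)
    define s' where "s' = (if s \<le> 1/2 then s + \<delta>'/2 else s - \<delta>'/2)"
    have s'01: "s' \<in> {0..1}" "s' \<noteq> s" "\<bar>s' - s\<bar> = \<delta>'/2" using s d' by (auto simp: s'_def)
    have same: "(z < s') = (z < s)" if z: "z \<in> Z" for z
    proof -
      have "z \<noteq> s" using z s by auto
      then have "\<delta> \<le> \<bar>s - z\<bar>" using \<delta> z by (auto simp: dist_real_def)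
      then have "\<delta> \<le> s - z \<or> \<delta> \<le> z - s" by (cases "z \<le> s") (auto simp: abs_if)
      moreover have "s' = s + \<delta>'/2 \<or> s' = s - \<delta>'/2" by (simp add: s'_def)
      ultimately show ?thesis using d' by linarith
    qed
    have "s' \<notin> Z"
    proof
      assume "s' \<in> Z"
      then have "\<delta> \<le> \<bar>s - s'\<bar>" using \<delta> s'01 by (auto simp: dist_real_def)
      then show False using s'01 d' by (simp add: abs_minus_commute)
    qed
    moreover have "LS s' = LS s" using same by (auto simp: LS_def Z_def)
    ultimately show ?thesis using s'01 by blast
  qed
  define G where "G s = lim (\<lambda>n. Y n + (\<Sum>j\<in>LS s. w n j))" for s
  define H where "H s = lim (\<lambda>n. X n - (\<Sum>j\<in>LS s. w n j * r n j))" for s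
  have F3: "(\<lambda>n. Y n + Om n s) \<longlonglongrightarrow> G s \<and> (\<lambda>n. X n - Pn n s) \<longlonglongrightarrow> H s \<and> ph s = H s + G s * s"
    if s: "s\<in>{0..1}" "s\<notin>Z" for s
  proof -
    obtain s' where s': "s' \<in> {0..1}" "s' \<notin> Z" "s' \<noteq> s" "LS s' = LS s" using F2[OF s] by blast
    have Om': "Om n s' = Om n s" "Pn n s' = Pn n s" for n using s' by (simp_all add: Om_def Pn_def)
    have ss: "s - s' \<noteq> 0" using s' by simp
    have ev: "eventually (\<lambda>n. (phi n s - phi n s') / (s - s') = Y n + Om n s) sequentially"
      using F1[OF s] F1[OF s'(1,2)]
    proof eventually_elim
      case (elim n)
      then have "phi n s - phi n s' = (Y n + Om n s) * (s - s')" by (simp add: Om' algebra_simps)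
      then show ?case using ss by simp
    qed
    have c1: "(\<lambda>n. (phi n s - phi n s') / (s - s')) \<longlonglongrightarrow> (ph s - ph s') / (s - s')"
      using ss by (intro tendsto_intros conv s s') auto
    have c1': "(\<lambda>n. Y n + Om n s) \<longlonglongrightarrow> (ph s - ph s') / (s - s')"
      using Lim_transform_eventually[OF c1 ev] .
    then have Gs: "G s = (ph s - ph s') / (s - s')" unfolding G_def Om_def[symmetric] by (rule limI)
    have ev2: "eventually (\<lambda>n. phi n s - (Y n + Om n s) * s = X n - Pn n s) sequentially"
      using F1[OF s] by eventually_elim (simp add: algebra_simps)
    have c2: "(\<lambda>n. phi n s - (Y n + Om n s) * s) \<longlonglongrightarrow> ph s - G s * s"
      unfolding Gs by (intro tendsto_intros conv s c1')
    have c2': "(\<lambda>n. X n - Pn n s) \<longlonglongrightarrow> ph s - G s * s"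
      using Lim_transform_eventually[OF c2 ev2] .
    then have Hs: "H s = ph s - G s * s" unfolding H_def Pn_def[symmetric] by (rule limI)
    show ?thesis using c1' c2' Gs Hs by simp
  qed
  define m where "m = Min (insert 1 Z)"
  have m1: "0 < m" unfolding m_def using Zf Z01 by (subst Min_gr_iff) auto
  have m2: "m \<le> 1" unfolding m_def using Zf by (intro Min_le) auto
  have m3: "\<forall>z\<in>Z. m \<le> z" unfolding m_def using Zf by (auto intro: Min_le)
  define s0 where "s0 = m/2"
  have s01: "s0 \<in> {0..1}" using m1 m2 by (simp add: s0_def)
  have s02: "s0 \<notin> Z"
  proof
    assume "s0 \<in> Z" then have "m \<le> m/2" using m3 by (auto simp: s0_def)
    then show False using m1 by simp
  qed
  have s03: "LS s0 = {}"
  proof -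
    have "\<not> sh j < s0" if "j \<in> J" for j
    proof -
      have "m \<le> sh j" using m3 that Z_def by auto
      then show ?thesis using m1 by (simp add: s0_def)
    qed
    then show ?thesis by (auto simp: LS_def)
  qed
  note s0 = s01 s02 s03
  define A where "A = H s0"
  define B where "B = G s0"
  have YB: "Y \<longlonglongrightarrow> B" and XA: "X \<longlonglongrightarrow> A" using F3[OF s0(1,2)] s0(3)
    by (simp_all add: A_def B_def Om_def Pn_def)
  have F4: "(\<lambda>n. Om n s) \<longlonglongrightarrow> G s - B \<and> (\<lambda>n. Pn n s) \<longlonglongrightarrow> A - H s" if s: "s\<in>{0..1}" "s\<notin>Z" for s
  proof -
    have "(\<lambda>n. (Y n + Om n s) - Y n) \<longlonglongrightarrow> G s - B" using F3[OF s] YB by (intro tendsto_intros) auto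
    moreover have "(\<lambda>n. X n - (X n - Pn n s)) \<longlonglongrightarrow> A - H s" using F3[OF s] XA by (intro tendsto_intros) auto
    ultimately show ?thesis by simp
  qed
  have Zfacts: "\<exists>\<delta>>0. 0 \<le> z - \<delta> \<and> z + \<delta> \<le> 1 \<and> (\<forall>t. z - \<delta> < t \<and> t < z + \<delta> \<and> t \<noteq> z \<longrightarrow> t \<notin> Z)"
    if z: "z \<in> Z" for z
  proof -
    obtain \<delta>0 where d0: "\<delta>0 > 0" "\<forall>x\<in>Z. x \<noteq> z \<longrightarrow> \<delta>0 \<le> dist z x" using finite_set_avoid[OF Zf] by blast
    define \<delta> where "\<delta> = min \<delta>0 (min z (1 - z))"
    have "\<delta> > 0" using d0 Z01[OF z] by (simp add: \<delta>_def)
    moreover have "0 \<le> z - \<delta>" "z + \<delta> \<le> 1" by (auto simp: \<delta>_def)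
    moreover have "\<forall>t. z - \<delta> < t \<and> t < z + \<delta> \<and> t \<noteq> z \<longrightarrow> t \<notin> Z"
    proof (intro allI impI)
      fix t assume t: "z - \<delta> < t \<and> t < z + \<delta> \<and> t \<noteq> z"
      show "t \<notin> Z"
      proof
        assume "t \<in> Z"
        then have "\<delta>0 \<le> \<bar>z - t\<bar>" using d0 t by (auto simp: dist_real_def)
        moreover have "\<delta> \<le> \<delta>0" by (simp add: \<delta>_def)
        moreover have "\<bar>z - t\<bar> < \<delta>" using t by (simp add: abs_less_iff; linarith)
        ultimately show False by linarith
      qed
    qed
    ultimately show ?thesis by blast
  qed
  have Zfacts2: "\<exists>sL sR. sL \<in> {0..1} \<and> sL \<notin> Z \<and> sR \<in> {0..1} \<and> sR \<notin> Z \<and>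
        LS sL = {j\<in>J. sh j < z} \<and> LS sR = {j\<in>J. sh j < z} \<union> {j\<in>J. sh j = z} \<and>
        ph z = H sL + G sL * z \<and> ph z = H sR + G sR * z" if z: "z \<in> Z" for z
  proof -
    obtain \<delta> where d: "\<delta>>0" "0 \<le> z - \<delta>" "z + \<delta> \<le> 1" "\<forall>t. z - \<delta> < t \<and> t < z + \<delta> \<and> t \<noteq> z \<longrightarrow> t \<notin> Z"
      using Zfacts[OF z] by blast
    define sL where "sL = z - \<delta>/2"
    define sR where "sR = z + \<delta>/2"
    have sLR: "sL \<in> {0..1}" "sL \<notin> Z" "sR \<in> {0..1}" "sR \<notin> Z" using d by (auto simp: sL_def sR_def)
    have LSL: "LS t = {j\<in>J. sh j < z}" if t: "z - \<delta> < t" "t < z" for t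
    proof -
      have "sh j < t \<longleftrightarrow> sh j < z" if j: "j \<in> J" for j
      proof -
        have "sh j \<in> Z" using j Z_def by auto
        then have "\<not> (t \<le> sh j \<and> sh j < z)" using d(4) t by force
        then show ?thesis using t by auto
      qed
      then show ?thesis by (auto simp: LS_def)
    qed
    have LSR: "LS t = {j\<in>J. sh j < z} \<union> {j\<in>J. sh j = z}" if t: "z < t" "t < z + \<delta>" for t
    proof -
      have "sh j < t \<longleftrightarrow> sh j \<le> z" if j: "j \<in> J" for j
      proof -
        have "sh j \<in> Z" using j Z_def by auto
        then have "\<not> (z < sh j \<and> sh j < t)" using d(4) t by force
        then show ?thesis using t by auto
      qed
      then show ?thesis by (auto simp: LS_def)
    qed
    have tZ: "t \<in> {0..1} \<and> t \<notin> Z" if "z - \<delta> < t" "t < z + \<delta>" "t \<noteq> z" for t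
      using d that by auto
    have eqL: "ph t = H sL + G sL * t" if t: "z - \<delta> < t" "t < z" for t
    proof -
      have "LS t = LS sL" using LSL[OF t] LSL[of sL] d by (simp add: sL_def)
      then have "G t = G sL" "H t = H sL" by (simp_all add: G_def H_def)
      then show ?thesis using F3[of t] tZ[of t] t d by auto
    qed
    have eqR: "ph t = H sR + G sR * t" if t: "z < t" "t < z + \<delta>" for t
    proof -
      have "LS t = LS sR" using LSR[OF t] LSR[of sR] d by (simp add: sR_def)
      then have "G t = G sR" "H t = H sR" by (simp_all add: G_def H_def)
      then show ?thesis using F3[of t] tZ[of t] t d by auto
    qed
    have "ph z = H sL + G sL * z"
      by (rule cont_interval_eq[OF cont, of "z - \<delta>" z]) (use d eqL in auto)
    moreover have "ph z = H sR + G sR * z"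
      by (rule cont_interval_eq[OF cont, of z "z + \<delta>"]) (use d eqR in auto)
    moreover have "LS sL = {j\<in>J. sh j < z}" using LSL[of sL] d by (simp add: sL_def)
    moreover have "LS sR = {j\<in>J. sh j < z} \<union> {j\<in>J. sh j = z}" using LSR[of sR] d by (simp add: sR_def)
    ultimately show ?thesis using sLR by blast
  qed
  have ex: "\<forall>z. \<exists>k. (\<lambda>n. \<Sum>j\<in>{j\<in>J. sh j = z}. w n j) \<longlonglongrightarrow> k \<and>
                 (\<lambda>n. \<Sum>j\<in>{j\<in>J. sh j = z}. w n j * r n j) \<longlonglongrightarrow> k * z"
  proof
    fix z
    show "\<exists>k. (\<lambda>n. \<Sum>j\<in>{j\<in>J. sh j = z}. w n j) \<longlonglongrightarrow> k \<and>
                 (\<lambda>n. \<Sum>j\<in>{j\<in>J. sh j = z}. w n j * r n j) \<longlonglongrightarrow> k * z"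
    proof (cases "z \<in> Z")
      case False
      then have E: "{j\<in>J. sh j = z} = {}" using Z_def by auto
      show ?thesis unfolding E by (intro exI[of _ 0]) simp
    next
      case True
      obtain sL sR where S: "sL \<in> {0..1}" "sL \<notin> Z" "sR \<in> {0..1}" "sR \<notin> Z"
        "LS sL = {j\<in>J. sh j < z}" "LS sR = {j\<in>J. sh j < z} \<union> {j\<in>J. sh j = z}"
        "ph z = H sL + G sL * z" "ph z = H sR + G sR * z"
        using Zfacts2[OF True] by blast
      have disj: "{j\<in>J. sh j < z} \<inter> {j\<in>J. sh j = z} = {}" by auto
      have fin: "finite {j\<in>J. sh j < z}" "finite {j\<in>J. sh j = z}" using J by auto
      have e1: "(\<Sum>j\<in>{j\<in>J. sh j = z}. w n j) = Om n sR - Om n sL" for n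
        unfolding Om_def S(5,6) by (simp add: sum.union_disjoint[OF fin disj])
      have e2: "(\<Sum>j\<in>{j\<in>J. sh j = z}. w n j * r n j) = Pn n sR - Pn n sL" for n
        unfolding Pn_def S(5,6) by (simp add: sum.union_disjoint[OF fin disj])
      have "(\<lambda>n. Om n sR - Om n sL) \<longlonglongrightarrow> (G sR - B) - (G sL - B)"
        using F4[OF S(3,4)] F4[OF S(1,2)] by (intro tendsto_intros) auto
      moreover have "(\<lambda>n. Pn n sR - Pn n sL) \<longlonglongrightarrow> (A - H sR) - (A - H sL)"
        using F4[OF S(3,4)] F4[OF S(1,2)] by (intro tendsto_intros) auto
      moreover have "(A - H sR) - (A - H sL) = ((G sR - B) - (G sL - B)) * z"
        using S(7,8) by (simp add: algebra_simps)
      ultimately have "(\<lambda>n. Om n sR - Om n sL) \<longlonglongrightarrow> (G sR - B) - (G sL - B) \<and>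
          (\<lambda>n. Pn n sR - Pn n sL) \<longlonglongrightarrow> ((G sR - B) - (G sL - B)) * z" by simp
      then show ?thesis unfolding e1 e2 by blast
    qed
  qed
  obtain \<kappa> where kap: "\<forall>z. (\<lambda>n. \<Sum>j\<in>{j\<in>J. sh j = z}. w n j) \<longlonglongrightarrow> \<kappa> z \<and>
                 (\<lambda>n. \<Sum>j\<in>{j\<in>J. sh j = z}. w n j * r n j) \<longlonglongrightarrow> \<kappa> z * z"
    using choice[OF ex] by blast
  have GH: "G s1 = B + (\<Sum>z\<in>{z\<in>Z. z < s1}. \<kappa> z) \<and> H s1 = A - (\<Sum>z\<in>{z\<in>Z. z < s1}. \<kappa> z * z)"
    if s1: "s1 \<in> {0..1}" "s1 \<notin> Z" for s1
  proof -
    have fT: "finite {z\<in>Z. z < s1}" using Zf by simp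
    have img: "sh ` LS s1 \<subseteq> {z\<in>Z. z < s1}" by (auto simp: LS_def Z_def)
    have grp: "{x \<in> LS s1. sh x = y} = {j\<in>J. sh j = y}" if "y \<in> {z\<in>Z. z < s1}" for y
      using that by (auto simp: LS_def)
    have o1: "Om n s1 = (\<Sum>y\<in>{z\<in>Z. z < s1}. \<Sum>j\<in>{j\<in>J. sh j = y}. w n j)" for n
      unfolding Om_def sum.group[OF LSf fT img, symmetric] by (rule sum.cong) (auto simp: grp)
    have o2: "Pn n s1 = (\<Sum>y\<in>{z\<in>Z. z < s1}. \<Sum>j\<in>{j\<in>J. sh j = y}. w n j * r n j)" for n
      unfolding Pn_def sum.group[OF LSf fT img, symmetric] by (rule sum.cong) (auto simp: grp)
    have "(\<lambda>n. Om n s1) \<longlonglongrightarrow> (\<Sum>y\<in>{z\<in>Z. z < s1}. \<kappa> y)"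
      unfolding o1 by (intro tendsto_sum) (use kap in auto)
    moreover have "(\<lambda>n. Pn n s1) \<longlonglongrightarrow> (\<Sum>y\<in>{z\<in>Z. z < s1}. \<kappa> y * y)"
      unfolding o2 by (intro tendsto_sum) (use kap in auto)
    ultimately have g1: "G s1 - B = (\<Sum>y\<in>{z\<in>Z. z < s1}. \<kappa> y)"
      and g2: "A - H s1 = (\<Sum>y\<in>{z\<in>Z. z < s1}. \<kappa> y * y)"
      using F4[OF s1] LIMSEQ_unique by blast+
    have "G s1 = B + (\<Sum>z\<in>{z\<in>Z. z < s1}. \<kappa> z)" using g1 by linarith
    moreover have "H s1 = A - (\<Sum>z\<in>{z\<in>Z. z < s1}. \<kappa> z * z)" using g2 by linarith
    ultimately show ?thesis by blast
  qed
  have final: "ph s = A + B * s + (\<Sum>z\<in>Z. \<kappa> z * relu(s - z))" if s: "s \<in> {0..1}" for s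
  proof -
    have "\<exists>s1. s1 \<in> {0..1} \<and> s1 \<notin> Z \<and> {z\<in>Z. z < s1} = {z\<in>Z. z < s} \<and> ph s = H s1 + G s1 * s"
    proof (cases "s \<in> Z")
      case False
      then show ?thesis using F3[OF s False] s by blast
    next
      case True
      obtain sL sR where S: "sL \<in> {0..1}" "sL \<notin> Z" "sR \<in> {0..1}" "sR \<notin> Z"
        "LS sL = {j\<in>J. sh j < s}" "LS sR = {j\<in>J. sh j < s} \<union> {j\<in>J. sh j = s}"
        "ph s = H sL + G sL * s" "ph s = H sR + G sR * s"
        using Zfacts2[OF True] by blast
      have "{z\<in>Z. z < sL} = {z\<in>Z. z < s}"
      proof -
        have "z < sL \<longleftrightarrow> z < s" if zZ: "z \<in> Z" for z
        proof -
          obtain j where j: "j \<in> J" "z = sh j" using zZ Z_def by auto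
          have "j \<in> LS sL \<longleftrightarrow> sh j < s" using S(5) j by auto
          then show ?thesis using j by (simp add: LS_def)
        qed
        then show ?thesis by auto
      qed
      then show ?thesis using S by blast
    qed
    then obtain s1 where s1: "s1 \<in> {0..1}" "s1 \<notin> Z" "{z\<in>Z. z < s1} = {z\<in>Z. z < s}" "ph s = H s1 + G s1 * s"
      by blast
    have "(\<Sum>z\<in>Z. \<kappa> z * relu(s - z)) = (\<Sum>z\<in>Z. if z < s then \<kappa> z * (s - z) else 0)"
      by (rule sum.cong) (auto simp: relu_def)
    also have "\<dots> = (\<Sum>z\<in>{z\<in>Z. z < s}. \<kappa> z * (s - z))" by (simp add: sum.inter_filter[OF Zf])
    also have "\<dots> = (\<Sum>z\<in>{z\<in>Z. z < s}. \<kappa> z) * s - (\<Sum>z\<in>{z\<in>Z. z < s}. \<kappa> z * z)"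
      unfolding sum_distrib_right sum_subtractf[symmetric]
      by (rule sum.cong) (simp_all add: algebra_simps)
    finally show ?thesis using s1 GH[OF s1(1,2)] by (simp add: algebra_simps)
  qed
  have final': "\<forall>s\<in>{0..1}. ph s = A + B * s + (\<Sum>z\<in>sh`J. \<kappa> z * relu(s - z))"
    using final by (simp add: Z_def)
  show ?thesis using kap final' by blast
qed


definition ocube :: "real \<Rightarrow> (real ^ 'd) set" where
  "ocube B = {x. \<forall>i. - B < x $ i \<and> x $ i < B}"

lemma open_ocube: "open (ocube B :: (real^'d) set)"
proof -
  have "(ocube B :: (real^'d) set) = (\<Inter>i. {x. - B < x $ i} \<inter> {x. x $ i < B})" by (auto simp: ocube_def)
  moreover have "open (\<Inter>i. {x::real^'d. - B < x $ i} \<inter> {x. x $ i < B})"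
    by (intro open_INT open_Int finite_UNIV ballI open_Collect_less continuous_intros) simp
  ultimately show ?thesis by simp
qed

lemma ocube_sub: "ocube B \<subseteq> cube B" by (auto simp: ocube_def cube_def less_imp_le)

lemma conv_le: fixes x y s lo :: real
  assumes "lo \<le> x" "lo \<le> y" "0 \<le> s" "s \<le> 1" shows "lo \<le> (1-s)*x + s*y"
proof -
  have "(1-s)*lo \<le> (1-s)*x" "s*lo \<le> s*y" using assms by (auto intro: mult_left_mono)
  then show ?thesis by (simp add: algebra_simps)
qed

lemma conv_lt: fixes x y s lo :: real
  assumes "lo < x" "lo < y" "0 \<le> s" "s \<le> 1" shows "lo < (1-s)*x + s*y"
proof (cases "s = 0")
  case True then show ?thesis using assms by simp
next
  case False
  then have "s > 0" using assms by simp
  have "(1-s)*lo \<le> (1-s)*x" using assms by (auto intro: mult_left_mono)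
  moreover have "s*lo < s*y" using assms \<open>s > 0\<close> by simp
  ultimately show ?thesis by (simp add: algebra_simps)
qed

lemma cube_seg: assumes "p \<in> cube B" "q \<in> cube B" "0 \<le> s" "s \<le> 1"
  shows "p + s *\<^sub>R (q - p) \<in> cube B"
proof -
  have "(p + s *\<^sub>R (q - p)) $ i = (1-s) * p$i + s * q$i" for i by (simp add: algebra_simps)
  moreover have "- B \<le> (1-s) * p$i + s * q$i" "(1-s) * p$i + s * q$i \<le> B" for i
  proof -
    show "- B \<le> (1-s) * p$i + s * q$i" using assms by (intro conv_le) (auto simp: cube_def)
    have "- B \<le> (1-s) * (-p$i) + s * (-q$i)" using assms by (intro conv_le) (auto simp: cube_def)
    then show "(1-s) * p$i + s * q$i \<le> B" by (simp add: algebra_simps)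
  qed
  ultimately show ?thesis by (simp add: cube_def)
qed

lemma ocube_seg: assumes "p \<in> ocube B" "q \<in> ocube B" "0 \<le> s" "s \<le> 1"
  shows "p + s *\<^sub>R (q - p) \<in> ocube B"
proof -
  have "(p + s *\<^sub>R (q - p)) $ i = (1-s) * p$i + s * q$i" for i by (simp add: algebra_simps)
  moreover have "- B < (1-s) * p$i + s * q$i" "(1-s) * p$i + s * q$i < B" for i
  proof -
    show "- B < (1-s) * p$i + s * q$i" using assms by (intro conv_lt) (auto simp: ocube_def)
    have "- B < (1-s) * (-p$i) + s * (-q$i)" using assms by (intro conv_lt) (auto simp: ocube_def)
    then show "(1-s) * p$i + s * q$i < B" by (simp add: algebra_simps)
  qed
  ultimately show ?thesis by (simp add: ocube_def)
qed

lemma ev_affine_ne: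
  fixes \<alpha> \<beta> :: real assumes "\<beta> \<noteq> 0"
  shows "eventually (\<lambda>t. \<alpha> + t * \<beta> \<noteq> 0) (at_right 0)"
proof (cases "\<alpha> = 0")
  case True
  show ?thesis using eventually_at_right_less[of 0] by eventually_elim (use True assms in auto)
next
  case False
  have "((\<lambda>t. \<alpha> + t * \<beta>) \<longlongrightarrow> \<alpha> + 0 * \<beta>) (at_right 0)" by (intro tendsto_intros)
  then show ?thesis using False tendsto_imp_eventually_ne by fastforce
qed

lemma ev_open_path:
  fixes y v :: "'a::real_normed_vector"
  assumes "open S" "y \<in> S"
  shows "eventually (\<lambda>t. y + t *\<^sub>R v \<in> S) (at_right 0)"
proof -
  have "((\<lambda>t. y + t *\<^sub>R v) \<longlongrightarrow> y + 0 *\<^sub>R v) (at_right 0)" by (intro tendsto_intros)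
  then show ?thesis using assms topological_tendstoD by fastforce
qed

lemma vec_avoid:
  fixes u :: "'a::real_inner" and A :: "'a set"
  assumes "finite A" "\<forall>a\<in>A. a \<noteq> 0 \<and> inner u a = 0"
  shows "\<exists>w. inner u w = 0 \<and> (\<forall>a\<in>A. inner a w \<noteq> 0)"
  using assms
proof (induction A rule: finite_induct)
  case empty
  show ?case by (rule exI[of _ 0]) simp
next
  case (insert b A)
  then obtain w where w: "inner u w = 0" "\<forall>a\<in>A. inner a w \<noteq> 0" by auto
  show ?case
  proof (cases "inner b w \<noteq> 0")
    case True then show ?thesis using w by auto
  next
    case False
    define T where "T = insert 0 ((\<lambda>a. - inner a w / inner a b) ` A)"
    have "finite T" using insert by (simp add: T_def)
    then obtain t where t: "t \<notin> T" using ex_new_if_finite[OF infinite_UNIV_char_0] by blast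
    define w' where "w' = w + t *\<^sub>R b"
    have "inner u w' = 0" using w insert by (simp add: w'_def inner_add_right)
    moreover have "inner b w' \<noteq> 0" using False t insert by (simp add: w'_def inner_add_right T_def)
    moreover have "inner a w' \<noteq> 0" if a: "a \<in> A" for a
    proof (cases "inner a b = 0")
      case True then show ?thesis using w a by (simp add: w'_def inner_add_right)
    next
      case False
      have "t \<noteq> - inner a w / inner a b" using t a by (auto simp: T_def)
      then have "inner a w + t * inner a b \<noteq> 0" using False by (auto simp: field_simps)
      then show ?thesis by (simp add: w'_def inner_add_right)
    qed
    ultimately show ?thesis by auto
  qed
qed


lemma sgn_aux1: "(0::real) < x * y \<Longrightarrow> y < 0 \<Longrightarrow> x < 0" by (auto simp: zero_less_mult_iff)
lemma sgn_aux2: "(0::real) < x * y \<Longrightarrow> y > 0 \<Longrightarrow> x > 0" by (auto simp: zero_less_mult_iff)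

locale setting =
  fixes a B :: real and N :: nat
    and c :: "nat \<Rightarrow> nat \<Rightarrow> real" and pu :: "nat \<Rightarrow> nat \<Rightarrow> real^'d" and pv :: "nat \<Rightarrow> nat \<Rightarrow> real"
    and e :: "nat \<Rightarrow> real" and g :: "real^'d \<Rightarrow> real" and U :: "nat \<Rightarrow> real^'d" and V :: "nat \<Rightarrow> real"
  assumes Bpos: "B > 0" and apos: "a \<ge> 0" and a1: "a \<noteq> 1"
    and conv: "\<And>x. x \<in> cube B \<Longrightarrow> (\<lambda>n. (\<Sum>j<N. c n j * pReLU a (pu n j \<bullet> x + pv n j)) + e n) \<longlonglongrightarrow> g x"
    and gcont: "continuous_on (cube B) g"
    and puc: "\<And>j. j < N \<Longrightarrow> (\<lambda>n. pu n j) \<longlonglongrightarrow> U j"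
    and pvc: "\<And>j. j < N \<Longrightarrow> (\<lambda>n. pv n j) \<longlonglongrightarrow> V j"
    and unit: "\<And>j. j < N \<Longrightarrow> norm (U j)^2 + (V j)^2 = 1"
begin

definition "al = min 1 a"
definition "be = \<bar>1 - a\<bar>"
definition "L j x = U j \<bullet> x + V j"
definition "F n x = (\<Sum>j<N. c n j * pReLU a (pu n j \<bullet> x + pv n j)) + e n"

lemma be_pos: "be > 0" using a1 by (simp add: be_def)

lemma rho: "pReLU a y = al * y + be * relu y"
  using pReLU_decomp[OF apos] by (simp add: al_def be_def)

lemma segment:
  assumes p: "p \<in> cube B" and q: "q \<in> cube B" and gen: "\<And>k. k < N \<Longrightarrow> L k p \<noteq> 0 \<and> L k q \<noteq> 0"
    and J'_def: "J' = {j\<in>{..<N}. L j p * L j q < 0}"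
    and sh_def: "\<And>j. sh j = L j p / (L j p - L j q)"
    and rr_def: "\<And>n j. rr n j = (pu n j \<bullet> p + pv n j) / ((pu n j \<bullet> p + pv n j) - (pu n j \<bullet> q + pv n j))"
    and w_def: "\<And>n j. w n j = be * c n j * \<bar>pu n j \<bullet> (q - p)\<bar>"
  shows "\<exists>\<kappa>. (\<forall>z. (\<lambda>n. \<Sum>j\<in>{j\<in>J'. sh j = z}. w n j) \<longlonglongrightarrow> \<kappa> z \<and>
                 (\<lambda>n. \<Sum>j\<in>{j\<in>J'. sh j = z}. w n j * rr n j) \<longlonglongrightarrow> \<kappa> z * z) \<and>
             (\<exists>A0 B0. \<forall>s\<in>{0..1}. g (p + s *\<^sub>R (q - p)) = A0 + B0 * s + (\<Sum>z\<in>sh`J'. \<kappa> z * relu(s - z)))"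
proof -
  define P where "P n j = pu n j \<bullet> p + pv n j" for n j
  define Q where "Q n j = pu n j \<bullet> q + pv n j" for n j
  have PL: "(\<lambda>n. P n j) \<longlonglongrightarrow> L j p" if "j<N" for j
    unfolding P_def L_def by (intro tendsto_intros puc pvc that)
  have QL: "(\<lambda>n. Q n j) \<longlonglongrightarrow> L j q" if "j<N" for j
    unfolding Q_def L_def by (intro tendsto_intros puc pvc that)
  have finJ: "finite J'" by (simp add: J'_def)
  have rconv: "(\<lambda>n. rr n j) \<longlonglongrightarrow> sh j" if j: "j \<in> J'" for j
  proof -
    have "L j p - L j q \<noteq> 0" using j by (auto simp: J'_def)
    then show ?thesis unfolding rr_def sh_def P_def[symmetric] Q_def[symmetric]
      using j by (intro tendsto_intros PL QL) (auto simp: J'_def)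
  qed
  have sh01: "0 < sh j \<and> sh j < 1" if j: "j \<in> J'" for j
  proof -
    have m: "L j p * L j q < 0" using j by (auto simp: J'_def)
    show ?thesis
    proof (cases "L j p > 0")
      case True
      then have "L j q < 0" using m by (simp add: mult_less_0_iff)
      then show ?thesis using True by (simp add: sh_def divide_less_eq)
    next
      case False
      then have "L j p < 0" "L j q > 0" using m by (auto simp: mult_less_0_iff)
      then show ?thesis by (simp add: sh_def divide_less_eq zero_less_divide_iff)
    qed
  qed
  define phi where "phi n s = F n (p + s *\<^sub>R (q - p))" for n s
  have conv1: "(\<lambda>n. phi n s) \<longlonglongrightarrow> g (p + s *\<^sub>R (q - p))" if s: "s \<in> {0..1}" for s
    unfolding phi_def F_def using conv cube_seg[OF p q] s by auto
  have cont1: "continuous_on {0..1} (\<lambda>s. g (p + s *\<^sub>R (q - p)))"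
    by (rule continuous_on_compose2[OF gcont]) (auto intro!: continuous_intros cube_seg[OF p q])
  have inner: "pu n j \<bullet> (p + s *\<^sub>R (q - p)) + pv n j = (1-s) * P n j + s * Q n j" for n j s
    by (simp add: P_def Q_def inner_add_right inner_diff_right algebra_simps)
  define AF where "AF n j s = c n j * (al * ((1-s) * P n j + s * Q n j) + be * (if j\<in>J' then (if P n j > 0 then (1-s) * P n j + s * Q n j else 0) else (1-s) * relu (P n j) + s * relu (Q n j)))" for n j s
  have AFlin: "AF n j s = AF n j 0 + s * (AF n j 1 - AF n j 0)" for n j s
    by (auto simp add: AF_def algebra_simps)
  define X where "X n = e n + (\<Sum>j<N. AF n j 0)" for n
  define Y where "Y n = (\<Sum>j<N. AF n j 1 - AF n j 0)" for n
  have "\<forall>j\<in>{..<N}. eventually (\<lambda>n. P n j * L j p > 0 \<and> Q n j * L j q > 0) sequentially"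
  proof
    fix j assume j: "j \<in> {..<N}"
    have "(\<lambda>n. P n j * L j p) \<longlonglongrightarrow> L j p * L j p" using PL j by (intro tendsto_intros) auto
    moreover have "L j p * L j p > 0" using gen[of j] j by (auto simp: zero_less_mult_iff linorder_neq_iff)
    ultimately have 1: "eventually (\<lambda>n. P n j * L j p > 0) sequentially" using order_tendstoD(1) by blast
    have "(\<lambda>n. Q n j * L j q) \<longlonglongrightarrow> L j q * L j q" using QL j by (intro tendsto_intros) auto
    moreover have "L j q * L j q > 0" using gen[of j] j by (auto simp: zero_less_mult_iff linorder_neq_iff)
    ultimately have 2: "eventually (\<lambda>n. Q n j * L j q > 0) sequentially" using order_tendstoD(1) by blast
    show "eventually (\<lambda>n. P n j * L j p > 0 \<and> Q n j * L j q > 0) sequentially"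
      using 1 2 by eventually_elim auto
  qed
  then have ev: "eventually (\<lambda>n. \<forall>j\<in>{..<N}. P n j * L j p > 0 \<and> Q n j * L j q > 0) sequentially"
    by (rule eventually_ball_finite[OF finite_lessThan])
  have sJ: "(\<Sum>j<N. (if j\<in>J' then XX j else 0)) = (\<Sum>j\<in>J'. XX j)" for XX :: "nat \<Rightarrow> real"
  proof -
    have "(\<Sum>j<N. (if j\<in>J' then XX j else 0)) = (\<Sum>j<N. (if L j p * L j q < 0 then XX j else 0))"
      by (rule sum.cong) (auto simp: J'_def)
    also have "\<dots> = (\<Sum>j\<in>J'. XX j)" unfolding J'_def by (rule sum.inter_filter[symmetric]) simp
    finally show ?thesis .
  qed
  have aff: "eventually (\<lambda>n. \<forall>s\<in>{0..1}. phi n s = X n + Y n * s + (\<Sum>j\<in>J'. w n j * relu (s - rr n j))) sequentially"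
    using ev
  proof eventually_elim
    case (elim n)
    show ?case
    proof
      fix s :: real assume s: "s\<in>{0..1}"
      have trm: "c n j * pReLU a (pu n j \<bullet> (p + s *\<^sub>R (q - p)) + pv n j) = AF n j s + (if j\<in>J' then w n j * relu(s - rr n j) else 0)" if j: "j<N" for j
      proof -
        have s1: "P n j * L j p > 0" "Q n j * L j q > 0" using elim j by auto
        have prod: "(P n j * Q n j) * (L j p * L j q) > 0" using s1
          by (metis mult.assoc mult.left_commute mult_pos_pos)
        show ?thesis
        proof (cases "j \<in> J'")
          case True
          then have "L j p * L j q < 0" by (auto simp: J'_def)
          then have PQ: "P n j * Q n j < 0" using sgn_aux1[OF prod] by blast
          have QP: "Q n j - P n j = pu n j \<bullet> (q - p)" by (simp add: P_def Q_def inner_diff_right)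
          have rrPQ: "rr n j = P n j / (P n j - Q n j)" by (simp add: rr_def P_def Q_def)
          have wQP: "w n j = be * c n j * \<bar>Q n j - P n j\<bar>" by (simp add: w_def QP)
          show ?thesis unfolding inner rho relu_seg[OF PQ, of s]
            using True by (simp add: AF_def wQP rrPQ algebra_simps)
        next
          case False
          then have "L j p * L j q \<ge> 0" using j by (auto simp: J'_def)
          moreover have "L j p * L j q \<noteq> 0" using gen j by auto
          ultimately have "L j p * L j q > 0" by linarith
          then have PQ: "P n j * Q n j \<ge> 0" using sgn_aux2[OF prod] by simp
          have s01: "0 \<le> s" "s \<le> 1" using s by auto
          show ?thesis unfolding inner rho relu_seg2[OF PQ s01]
            using False by (simp add: AF_def algebra_simps)
        qed
      qed
      have "phi n s = (\<Sum>j<N. AF n j s + (if j\<in>J' then w n j * relu(s - rr n j) else 0)) + e n"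
        unfolding phi_def F_def by (simp add: trm)
      also have "\<dots> = (\<Sum>j<N. AF n j s) + (\<Sum>j\<in>J'. w n j * relu(s - rr n j)) + e n"
        by (simp only: sum.distrib sJ)
      also have "(\<Sum>j<N. AF n j s) = (\<Sum>j<N. AF n j 0) + s * (\<Sum>j<N. AF n j 1 - AF n j 0)"
        by (subst AFlin) (simp add: sum.distrib sum_distrib_left)
      finally show "phi n s = X n + Y n * s + (\<Sum>j\<in>J'. w n j * relu (s - rr n j))"
        by (simp add: X_def Y_def algebra_simps)
    qed
  qed
  from oneD[OF finJ rconv sh01 conv1 cont1 aff] show ?thesis by blast
qed

end


lemma ev_affine_ne2:
  fixes \<alpha> \<beta> :: real assumes "\<alpha> \<noteq> 0 \<or> \<beta> \<noteq> 0"
  shows "eventually (\<lambda>t. \<alpha> + t * \<beta> \<noteq> 0) (at_right 0)"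
proof (cases "\<alpha> = 0")
  case True
  have "\<beta> \<noteq> 0" using assms True by simp
  then show ?thesis using ev_affine_ne[of \<beta> \<alpha>] by simp
next
  case False
  have "((\<lambda>t. \<alpha> + t * \<beta>) \<longlongrightarrow> \<alpha> + 0 * \<beta>) (at_right 0)" by (intro tendsto_intros)
  then show ?thesis using False tendsto_imp_eventually_ne by fastforce
qed

lemma at_right_nonbot: "at_right (0::real) \<noteq> bot"
  using trivial_limit_at_right_real by blast

context setting
begin

definition "same j k \<longleftrightarrow> (U k = U j \<and> V k = V j) \<or> (U k = - U j \<and> V k = - V j)"
definition "cls j = {k\<in>{..<N}. same j k}"
definition "crossing j \<longleftrightarrow> (\<exists>x\<in>ocube B. L j x = 0)"
definition "pure r x \<longleftrightarrow> x \<in> ocube B \<and> L r x = 0 \<and> (\<forall>k<N. L k x = 0 \<longrightarrow> same r k)"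

lemma L_shift: "L k (y + t *\<^sub>R v) = L k y + t * (U k \<bullet> v)"
  by (simp add: L_def inner_add_right algebra_simps)

lemma same_L: "same j k \<Longrightarrow> L k x = L j x \<or> L k x = - L j x"
  by (auto simp: same_def L_def)

lemma same_U: "same j k \<Longrightarrow> U k = U j \<or> U k = - U j"
  by (auto simp: same_def)

lemma Unz: assumes "j < N" "crossing j" shows "U j \<noteq> 0"
proof
  assume U0: "U j = 0"
  then have "(V j)^2 = 1" using unit[OF assms(1)] by simp
  then have "V j \<noteq> 0" by auto
  moreover obtain x where "L j x = 0" using assms(2) by (auto simp: crossing_def)
  ultimately show False using U0 by (simp add: L_def)
qed

lemma Vnz: assumes "j < N" "U j = 0" shows "L j x \<noteq> 0"
proof -
  have "(V j)^2 = 1" using unit[OF assms(1)] assms(2) by simp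
  then have "V j \<noteq> 0" by auto
  then show ?thesis using assms(2) by (simp add: L_def)
qed

lemma pure_exists:
  assumes r: "r < N" "crossing r"
  shows "\<exists>x0. pure r x0"
proof -
  obtain x1 where x1: "x1 \<in> ocube B" "L r x1 = 0" using r by (auto simp: crossing_def)
  have ur: "U r \<noteq> 0" using Unz[OF r] .
  then have urr: "U r \<bullet> U r \<noteq> 0" by simp
  define pr where "pr k = U k - ((U k \<bullet> U r) / (U r \<bullet> U r)) *\<^sub>R U r" for k
  define K where "K = {k. k < N \<and> pr k \<noteq> 0}"
  have finK: "finite K" by (simp add: K_def)
  have "\<forall>a\<in>pr ` K. a \<noteq> 0 \<and> U r \<bullet> a = 0"
    using urr by (auto simp: K_def pr_def inner_diff_right inner_commute)
  then obtain w where w: "U r \<bullet> w = 0" "\<forall>a\<in>pr ` K. a \<bullet> w \<noteq> 0"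
    using vec_avoid[of "pr ` K" "U r"] finK by blast
  have Ukw: "U k \<bullet> w \<noteq> 0" if "k \<in> K" for k
  proof -
    have "pr k \<bullet> w \<noteq> 0" using w that by auto
    moreover have "pr k \<bullet> w = U k \<bullet> w" using w by (simp add: pr_def inner_diff_left)
    ultimately show ?thesis by simp
  qed
  have "\<forall>k\<in>K. eventually (\<lambda>t. L k (x1 + t *\<^sub>R w) \<noteq> 0) (at_right 0)"
    using Ukw ev_affine_ne by (simp add: L_shift)
  then have e1: "eventually (\<lambda>t. \<forall>k\<in>K. L k (x1 + t *\<^sub>R w) \<noteq> 0) (at_right 0)"
    by (rule eventually_ball_finite[OF finK])
  have e2: "eventually (\<lambda>t. x1 + t *\<^sub>R w \<in> ocube B) (at_right 0)"
    using ev_open_path[OF open_ocube x1(1)] .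
  obtain t where t: "\<forall>k\<in>K. L k (x1 + t *\<^sub>R w) \<noteq> 0" "x1 + t *\<^sub>R w \<in> ocube B"
    using eventually_happens'[OF at_right_nonbot eventually_conj[OF e1 e2]] by blast
  define x0 where "x0 = x1 + t *\<^sub>R w"
  have "L r x0 = 0" using x1 w by (simp add: x0_def L_shift)
  moreover have "same r k" if k: "k < N" "L k x0 = 0" for k
  proof -
    have "k \<notin> K" using t k by (auto simp: x0_def)
    then have prk: "pr k = 0" using k by (auto simp: K_def)
    define \<mu> where "\<mu> = (U k \<bullet> U r) / (U r \<bullet> U r)"
    have Uk: "U k = \<mu> *\<^sub>R U r" using prk by (simp add: pr_def \<mu>_def)
    have "L k x0 = L k x1" using w by (simp add: x0_def L_shift Uk)
    then have "L k x1 = 0" using k by simp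
    then have "\<mu> * (U r \<bullet> x1) + V k = 0" by (simp add: L_def Uk)
    moreover have "U r \<bullet> x1 + V r = 0" using x1 by (simp add: L_def)
    ultimately have "V k = - (\<mu> * (U r \<bullet> x1))" "U r \<bullet> x1 = - V r" by linarith+
    then have Vk: "V k = \<mu> * V r" by simp
    have "norm (U k)^2 + (V k)^2 = \<mu>^2 * (norm (U r)^2 + (V r)^2)"
      by (simp add: Uk Vk power_mult_distrib algebra_simps)
    then have "\<mu>^2 = 1" using unit[OF k(1)] unit[OF r(1)] by simp
    then have "\<mu> = 1 \<or> \<mu> = -1" by (simp add: power2_eq_1_iff)
    then show ?thesis using Uk Vk by (auto simp: same_def)
  qed
  ultimately have "pure r x0" using t by (auto simp: pure_def x0_def)
  then show ?thesis by blast
qed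

lemma pure_perturb:
  assumes "pure r x0" "U r \<bullet> w = 0"
  shows "\<exists>t>0. pure r (x0 + t *\<^sub>R w)"
proof -
  define K where "K = {k. k < N \<and> L k x0 \<noteq> 0}"
  have finK: "finite K" by (simp add: K_def)
  have "\<forall>k\<in>K. eventually (\<lambda>t. L k (x0 + t *\<^sub>R w) \<noteq> 0) (at_right 0)"
    using ev_affine_ne2 by (simp add: L_shift K_def)
  then have e1: "eventually (\<lambda>t. \<forall>k\<in>K. L k (x0 + t *\<^sub>R w) \<noteq> 0) (at_right 0)"
    by (rule eventually_ball_finite[OF finK])
  have e2: "eventually (\<lambda>t. x0 + t *\<^sub>R w \<in> ocube B) (at_right 0)"
    using ev_open_path[OF open_ocube] assms(1) by (auto simp: pure_def)
  obtain t where t: "\<forall>k\<in>K. L k (x0 + t *\<^sub>R w) \<noteq> 0" "x0 + t *\<^sub>R w \<in> ocube B" "t > 0"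
    using eventually_happens'[OF at_right_nonbot eventually_conj[OF eventually_conj[OF e1 e2] eventually_at_right_less]]
    by blast
  have "pure r (x0 + t *\<^sub>R w)"
    unfolding pure_def
  proof (intro conjI allI impI)
    show "x0 + t *\<^sub>R w \<in> ocube B" using t by simp
    show "L r (x0 + t *\<^sub>R w) = 0" using assms by (simp add: L_shift pure_def)
    fix k assume k: "k < N" "L k (x0 + t *\<^sub>R w) = 0"
    then have "L k x0 = 0" using t by (auto simp: K_def)
    then show "same r k" using assms k by (auto simp: pure_def)
  qed
  then show ?thesis using t by blast
qed

lemma generic_near:
  assumes x: "x \<in> cube B" and d: "\<delta> > 0"
  shows "\<exists>y\<in>ocube B. dist x y < \<delta> \<and> (\<forall>k<N. L k y \<noteq> 0)"
proof -
  define \<eta> where "\<eta> = min (1/2) (\<delta> / (2 * (norm x + 1)))"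
  have nx: "norm x + 1 > 0" by (simp add: add_nonneg_pos)
  have e1: "0 < \<eta>" using d nx by (simp add: \<eta>_def)
  have e2: "\<eta> \<le> 1/2" unfolding \<eta>_def by (rule min.cobounded1)
  have "\<eta> \<le> \<delta> / (2 * (norm x + 1))" unfolding \<eta>_def by (rule min.cobounded2)
  then have "\<eta> * (norm x + 1) \<le> \<delta> / (2 * (norm x + 1)) * (norm x + 1)"
    by (rule mult_right_mono) (use nx in simp)
  also have "\<dots> = \<delta>/2" using nx by (simp add: field_simps)
  finally have eta: "0 < \<eta>" "\<eta> \<le> 1/2" "\<eta> * (norm x + 1) \<le> \<delta>/2" using e1 e2 by auto
  define x' where "x' = (1 - \<eta>) *\<^sub>R x"
  have "x' \<in> ocube B"
  proof -
    have hx: "\<bar>x' $ i\<bar> < B" for i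
    proof -
      have xi: "- B \<le> x $ i \<and> x $ i \<le> B" using x unfolding cube_def by blast
      then have "\<bar>x $ i\<bar> \<le> B" by (simp add: abs_le_iff)
      then have h1: "(1 - \<eta>) * \<bar>x $ i\<bar> \<le> (1 - \<eta>) * B" using eta by (intro mult_left_mono) auto
      have h2: "(1 - \<eta>) * B < B" using eta Bpos by simp
      have h3: "\<bar>x' $ i\<bar> = (1 - \<eta>) * \<bar>x $ i\<bar>" using eta by (simp add: x'_def abs_mult)
      show ?thesis using h1 h2 h3 by linarith
    qed
    have "- B < x' $ i \<and> x' $ i < B" for i using hx[of i] by (auto simp: abs_less_iff)
    then show ?thesis by (simp add: ocube_def)
  qed
  have dx: "dist x x' < \<delta>/2 + \<delta>/2 - \<delta>/2"
  proof -
    have "x - x' = \<eta> *\<^sub>R x" by (simp add: x'_def scaleR_diff_left)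
    then have "dist x x' = \<eta> * norm x" using eta by (simp add: dist_norm)
    also have "\<dots> < \<eta> * (norm x + 1)" using eta by simp
    also have "\<dots> \<le> \<delta>/2" using eta by simp
    finally show ?thesis by simp
  qed
  define K where "K = {k. k < N \<and> U k \<noteq> 0}"
  have finK: "finite K" by (simp add: K_def)
  have fin2: "finite (U ` K)" using finK by simp
  have "\<forall>a\<in>U ` K. a \<noteq> 0 \<and> (0::real^'d) \<bullet> a = 0" by (auto simp: K_def)
  then obtain w where w: "\<forall>a\<in>U ` K. a \<bullet> w \<noteq> 0" using vec_avoid[OF fin2] by blast
  have "\<forall>k\<in>K. eventually (\<lambda>t. L k (x' + t *\<^sub>R w) \<noteq> 0) (at_right 0)"
    using w ev_affine_ne by (simp add: L_shift)
  then have e1: "eventually (\<lambda>t. \<forall>k\<in>K. L k (x' + t *\<^sub>R w) \<noteq> 0) (at_right 0)"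
    by (rule eventually_ball_finite[OF finK])
  have e2: "eventually (\<lambda>t. x' + t *\<^sub>R w \<in> ocube B) (at_right 0)"
    using ev_open_path[OF open_ocube \<open>x' \<in> ocube B\<close>] .
  have "((\<lambda>t. x' + t *\<^sub>R w) \<longlongrightarrow> x' + 0 *\<^sub>R w) (at_right 0)" by (intro tendsto_intros)
  then have e3: "eventually (\<lambda>t. dist (x' + t *\<^sub>R w) x' < \<delta>/2) (at_right 0)"
    using d by (auto dest!: tendstoD[where e="\<delta>/2"])
  obtain t where t: "\<forall>k\<in>K. L k (x' + t *\<^sub>R w) \<noteq> 0" "x' + t *\<^sub>R w \<in> ocube B" "dist (x' + t *\<^sub>R w) x' < \<delta>/2"
    using eventually_happens'[OF at_right_nonbot eventually_conj[OF eventually_conj[OF e1 e2] e3]] by blast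
  define y where "y = x' + t *\<^sub>R w"
  have "dist x y < \<delta>" using dx t(3) dist_triangle[of x y x'] by (simp add: y_def dist_commute)
  moreover have "L k y \<noteq> 0" if k: "k < N" for k
  proof (cases "U k = 0")
    case True then show ?thesis using Vnz k by simp
  next
    case False then show ?thesis using t k by (auto simp: K_def y_def)
  qed
  ultimately show ?thesis using t(2) y_def by blast
qed

end


lemma abs_sgn_aux:
  fixes x s u :: real
  assumes "0 < x * (s * u)" "s = 1 \<or> s = -1"
  shows "\<bar>x\<bar> = sgn u * s * x"
  using assms by (auto simp: zero_less_mult_iff sgn_real_def)

context setting
begin

lemma L_shift_minus: "L k (y - t *\<^sub>R v) = L k y - t * (U k \<bullet> v)"
  by (simp add: L_def inner_diff_right algebra_simps)

lemma same_refl: "same j j" by (simp add: same_def)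
lemma same_sym: "same j k \<Longrightarrow> same k j" by (auto simp: same_def)
lemma same_trans: "same j k \<Longrightarrow> same k m \<Longrightarrow> same j m" by (auto simp: same_def)

lemma class_lemma:
  assumes r: "r < N" "crossing r"
  shows "\<exists>lam. \<forall>v. U r \<bullet> v \<noteq> 0 \<longrightarrow> (\<lambda>n. \<Sum>j\<in>cls r. c n j * \<bar>pu n j \<bullet> v\<bar>) \<longlonglongrightarrow> lam * \<bar>U r \<bullet> v\<bar>"
proof -
  have ur: "U r \<noteq> 0" using Unz[OF r] .
  then have urr: "U r \<bullet> U r \<noteq> 0" by simp
  define \<sigma> where "\<sigma> j = (if U j = U r \<and> V j = V r then 1 else -1 :: real)" for j
  have \<sigma>cls: "U j = \<sigma> j *\<^sub>R U r \<and> V j = \<sigma> j * V r \<and> (\<sigma> j = 1 \<or> \<sigma> j = -1)" if "j \<in> cls r" for j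
    using that by (auto simp: \<sigma>_def cls_def same_def)
  have Lcls: "L j x = \<sigma> j * L r x" if "j \<in> cls r" for j x
    using \<sigma>cls[OF that] by (simp add: L_def algebra_simps)
  have finC: "finite (cls r)" by (simp add: cls_def)
  have clsN: "j < N" if "j \<in> cls r" for j using that by (simp add: cls_def)
  define W where "W n = (\<Sum>j\<in>cls r. (c n j * \<sigma> j) *\<^sub>R pu n j)" for n
  define Lam where "Lam n y = (\<Sum>j\<in>cls r. c n j * \<sigma> j * (pu n j \<bullet> y + pv n j))" for n y
  have Winner: "W n \<bullet> v = (\<Sum>j\<in>cls r. c n j * \<sigma> j * (pu n j \<bullet> v))" for n v
    by (simp add: W_def inner_sum_left)
  have Lam_shift: "Lam n (y + t *\<^sub>R v) = Lam n y + t * (W n \<bullet> v)" for n y t v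
  proof -
    have "Lam n (y + t *\<^sub>R v) = (\<Sum>j\<in>cls r. c n j * \<sigma> j * (pu n j \<bullet> y + pv n j) + t * (c n j * \<sigma> j * (pu n j \<bullet> v)))"
      unfolding Lam_def by (rule sum.cong) (simp_all add: inner_add_right algebra_simps)
    also have "\<dots> = Lam n y + t * (W n \<bullet> v)"
      by (simp add: Lam_def Winner sum.distrib sum_distrib_left)
    finally show ?thesis .
  qed
  have absid: "eventually (\<lambda>n. \<forall>j\<in>cls r. \<bar>pu n j \<bullet> v\<bar> = sgn (U r \<bullet> v) * \<sigma> j * (pu n j \<bullet> v) \<and> pu n j \<bullet> v \<noteq> 0) sequentially"
    if v: "U r \<bullet> v \<noteq> 0" for v
  proof -
    have "\<forall>j\<in>cls r. eventually (\<lambda>n. (pu n j \<bullet> v) * (\<sigma> j * (U r \<bullet> v)) > 0) sequentially"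
    proof
      fix j assume j: "j \<in> cls r"
      have "(\<lambda>n. (pu n j \<bullet> v) * (\<sigma> j * (U r \<bullet> v))) \<longlonglongrightarrow> (U j \<bullet> v) * (\<sigma> j * (U r \<bullet> v))"
        by (intro tendsto_intros puc clsN j)
      moreover have "(U j \<bullet> v) * (\<sigma> j * (U r \<bullet> v)) > 0"
      proof -
        have "(U j \<bullet> v) * (\<sigma> j * (U r \<bullet> v)) = (\<sigma> j)^2 * (U r \<bullet> v)^2"
          using \<sigma>cls[OF j] by (simp add: power2_eq_square algebra_simps)
        also have "\<dots> > 0" using \<sigma>cls[OF j] v by auto
        finally show ?thesis .
      qed
      ultimately show "eventually (\<lambda>n. (pu n j \<bullet> v) * (\<sigma> j * (U r \<bullet> v)) > 0) sequentially"
        using order_tendstoD(1) by blast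
    qed
    then have "eventually (\<lambda>n. \<forall>j\<in>cls r. (pu n j \<bullet> v) * (\<sigma> j * (U r \<bullet> v)) > 0) sequentially"
      by (rule eventually_ball_finite[OF finC])
    then show ?thesis
    proof eventually_elim
      case (elim n)
      show ?case
      proof
        fix j assume j: "j \<in> cls r"
        have pos: "(pu n j \<bullet> v) * (\<sigma> j * (U r \<bullet> v)) > 0" using elim j by auto
        have "\<sigma> j = 1 \<or> \<sigma> j = -1" using \<sigma>cls[OF j] by simp
        then show "\<bar>pu n j \<bullet> v\<bar> = sgn (U r \<bullet> v) * \<sigma> j * (pu n j \<bullet> v) \<and> pu n j \<bullet> v \<noteq> 0"
          using abs_sgn_aux[OF pos] pos by auto
      qed
    qed
  qed
  have K: "(\<exists>m. (\<lambda>n. W n \<bullet> v) \<longlonglongrightarrow> m) \<and> (\<lambda>n. Lam n y) \<longlonglongrightarrow> 0"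
    if y: "pure r y" and v: "U r \<bullet> v \<noteq> 0" for y v
  proof -
    have yo: "y \<in> ocube B" "L r y = 0" using y by (auto simp: pure_def)
    have "\<forall>k\<in>{..<N}. eventually (\<lambda>t. L k (y + t *\<^sub>R v) \<noteq> 0 \<and> L k (y + t *\<^sub>R (-v)) \<noteq> 0) (at_right 0)"
    proof
      fix k assume k: "k \<in> {..<N}"
      have h: "L k y \<noteq> 0 \<or> U k \<bullet> v \<noteq> 0"
      proof (cases "L k y = 0")
        case True then have "same r k" using y k by (auto simp: pure_def)
        then have "U k = U r \<or> U k = - U r" by (auto simp: same_def)
        then show ?thesis using v by auto
      qed simp
      then have h2: "L k y \<noteq> 0 \<or> U k \<bullet> (-v) \<noteq> 0" by simp
      show "eventually (\<lambda>t. L k (y + t *\<^sub>R v) \<noteq> 0 \<and> L k (y + t *\<^sub>R (-v)) \<noteq> 0) (at_right 0)"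
        using eventually_conj[OF ev_affine_ne2[OF h] ev_affine_ne2[OF h2]] by (simp add: L_shift L_shift_minus)
    qed
    then have e1: "eventually (\<lambda>t. \<forall>k\<in>{..<N}. L k (y + t *\<^sub>R v) \<noteq> 0 \<and> L k (y + t *\<^sub>R (-v)) \<noteq> 0) (at_right 0)"
      by (rule eventually_ball_finite[OF finite_lessThan])
    have e2: "eventually (\<lambda>t. y + t *\<^sub>R v \<in> ocube B) (at_right 0)" using ev_open_path[OF open_ocube yo(1)] .
    have e3: "eventually (\<lambda>t. y + t *\<^sub>R (-v) \<in> ocube B) (at_right 0)" using ev_open_path[OF open_ocube yo(1)] .
    obtain \<epsilon> where \<epsilon>: "\<forall>k\<in>{..<N}. L k (y + \<epsilon> *\<^sub>R v) \<noteq> 0 \<and> L k (y + \<epsilon> *\<^sub>R (-v)) \<noteq> 0"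
      "y + \<epsilon> *\<^sub>R v \<in> ocube B" "y + \<epsilon> *\<^sub>R (-v) \<in> ocube B" "\<epsilon> > 0"
      using eventually_happens'[OF at_right_nonbot eventually_conj[OF eventually_conj[OF eventually_conj[OF e1 e2] e3] eventually_at_right_less]]
      by blast
    define p where "p = y + \<epsilon> *\<^sub>R (-v)"
    define q where "q = y + \<epsilon> *\<^sub>R v"
    have pq: "p \<in> cube B" "q \<in> cube B" using \<epsilon> ocube_sub by (auto simp: p_def q_def)
    have gen: "L k p \<noteq> 0 \<and> L k q \<noteq> 0" if "k < N" for k using \<epsilon> that by (auto simp: p_def q_def)
    have qp: "q - p = (2*\<epsilon>) *\<^sub>R v"
    proof -
      have "q - p = \<epsilon> *\<^sub>R v + \<epsilon> *\<^sub>R v" by (simp add: p_def q_def)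
      also have "\<dots> = (2*\<epsilon>) *\<^sub>R v" by (metis scaleR_left_distrib mult_2)
      finally show ?thesis .
    qed
    define J' where "J' = {j\<in>{..<N}. L j p * L j q < 0}"
    define sh where "sh j = L j p / (L j p - L j q)" for j
    define rr where "rr n j = (pu n j \<bullet> p + pv n j) / ((pu n j \<bullet> p + pv n j) - (pu n j \<bullet> q + pv n j))" for n j
    define w where "w n j = be * c n j * \<bar>pu n j \<bullet> (q - p)\<bar>" for n j
    obtain \<kappa> where kap: "\<forall>z. (\<lambda>n. \<Sum>j\<in>{j\<in>J'. sh j = z}. w n j) \<longlonglongrightarrow> \<kappa> z \<and>
                 (\<lambda>n. \<Sum>j\<in>{j\<in>J'. sh j = z}. w n j * rr n j) \<longlonglongrightarrow> \<kappa> z * z"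
      using segment[OF pq gen J'_def sh_def rr_def w_def] by blast
    have Lp: "L j p = L j y - \<epsilon> * (U j \<bullet> v)" for j by (simp add: p_def L_shift L_shift_minus)
    have Lq: "L j q = L j y + \<epsilon> * (U j \<bullet> v)" for j by (simp add: q_def L_shift)
    have setEq: "{j\<in>J'. sh j = 1/2} = cls r"
    proof
      show "cls r \<subseteq> {j\<in>J'. sh j = 1/2}"
      proof
        fix j assume j: "j \<in> cls r"
        have Ujv: "U j \<bullet> v = \<sigma> j * (U r \<bullet> v)" using \<sigma>cls[OF j] by simp
        have Ly: "L j y = 0" using Lcls[OF j] yo by simp
        define a where "a = \<epsilon> * (\<sigma> j * (U r \<bullet> v))"
        have anz: "a \<noteq> 0" using \<epsilon> v \<sigma>cls[OF j] by (auto simp: a_def)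
        have "L j p = - a" "L j q = a" using Lp Lq Ly Ujv by (simp_all add: a_def)
        moreover have "- a * a < 0" using anz by (auto simp: zero_less_mult_iff linorder_neq_iff)
        moreover have "- a / (- a - a) = 1/2" using anz by (simp add: field_simps)
        ultimately show "j \<in> {j\<in>J'. sh j = 1/2}" using clsN[OF j] anz by (simp add: J'_def sh_def)
      qed
      show "{j\<in>J'. sh j = 1/2} \<subseteq> cls r"
      proof
        fix j assume j: "j \<in> {j\<in>J'. sh j = 1/2}"
        have jN: "j < N" and neg: "L j p * L j q < 0" using j by (auto simp: J'_def)
        have "L j p - L j q \<noteq> 0"
        proof
          assume "L j p - L j q = 0"
          then have "L j p * L j q = (L j p)^2" by (simp add: power2_eq_square)
          then show False using neg zero_le_power2[of "L j p"] by linarith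
        qed
        moreover have "L j p / (L j p - L j q) = 1/2" using j by (simp add: sh_def)
        ultimately have "L j p + L j q = 0" by (simp add: field_simps)
        then have "L j y = 0" using Lp Lq by simp
        then have "same r j" using y jN by (auto simp: pure_def)
        then show "j \<in> cls r" using jN by (simp add: cls_def)
      qed
    qed
    define k2 where "k2 = \<kappa> (1/2) * (1/2)"
    have c12: "(\<lambda>n. \<Sum>j\<in>cls r. w n j) \<longlonglongrightarrow> \<kappa> (1/2) \<and> (\<lambda>n. \<Sum>j\<in>cls r. w n j * rr n j) \<longlonglongrightarrow> k2"
      using kap[rule_format, of "1/2"] unfolding setEq k2_def by simp
    note c1 = conjunct1[OF c12] and c2 = conjunct2[OF c12]
    define sg where "sg = sgn (U r \<bullet> v)"
    have sg: "sg \<noteq> 0" using v by (simp add: sg_def sgn_real_def)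
    have E: "eventually (\<lambda>n. (\<Sum>j\<in>cls r. w n j) = (be * (2*\<epsilon>) * sg) * (W n \<bullet> v) \<and>
                            (\<Sum>j\<in>cls r. w n j * rr n j) = - (be * sg) * Lam n p) sequentially"
      using absid[OF v]
    proof eventually_elim
      case (elim n)
      have w1: "w n j = (be * (2*\<epsilon>) * sg) * (c n j * \<sigma> j * (pu n j \<bullet> v))" if j: "j \<in> cls r" for j
      proof -
        have A: "\<bar>pu n j \<bullet> v\<bar> = sg * \<sigma> j * (pu n j \<bullet> v)" using elim j by (simp add: sg_def)
        have absq: "\<bar>pu n j \<bullet> (q - p)\<bar> = 2 * \<epsilon> * \<bar>pu n j \<bullet> v\<bar>" using \<epsilon> by (simp add: qp abs_mult)
        show ?thesis unfolding w_def absq A by (simp add: algebra_simps)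
      qed
      have w2: "w n j * rr n j = - (be * sg) * (c n j * \<sigma> j * (pu n j \<bullet> p + pv n j))" if j: "j \<in> cls r" for j
      proof -
        have A: "\<bar>pu n j \<bullet> v\<bar> = sg * \<sigma> j * (pu n j \<bullet> v)" and nz: "pu n j \<bullet> v \<noteq> 0"
          using elim j by (simp_all add: sg_def)
        have absq: "\<bar>pu n j \<bullet> (q - p)\<bar> = 2 * \<epsilon> * \<bar>pu n j \<bullet> v\<bar>" using \<epsilon> by (simp add: qp abs_mult)
        have den: "(pu n j \<bullet> p + pv n j) - (pu n j \<bullet> q + pv n j) = - (2 * \<epsilon> * (pu n j \<bullet> v))"
        proof -
          have "(pu n j \<bullet> p + pv n j) - (pu n j \<bullet> q + pv n j) = - (pu n j \<bullet> (q - p))"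
            by (simp add: inner_diff_right)
          then show ?thesis by (simp add: qp)
        qed
        have rrv: "rr n j = (pu n j \<bullet> p + pv n j) / (- (2 * \<epsilon> * (pu n j \<bullet> v)))"
          unfolding rr_def den by (rule refl)
        have wv: "w n j = be * c n j * (2 * \<epsilon> * (sg * \<sigma> j * (pu n j \<bullet> v)))"
          unfolding w_def absq A by (rule refl)
        show ?thesis unfolding wv rrv using nz \<epsilon> by (simp add: field_simps)
      qed
      have "(\<Sum>j\<in>cls r. w n j) = (\<Sum>j\<in>cls r. (be * (2*\<epsilon>) * sg) * (c n j * \<sigma> j * (pu n j \<bullet> v)))"
        using w1 by (rule sum.cong[OF refl])
      also have "\<dots> = (be * (2*\<epsilon>) * sg) * (W n \<bullet> v)" by (simp add: Winner sum_distrib_left)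
      finally have 1: "(\<Sum>j\<in>cls r. w n j) = (be * (2*\<epsilon>) * sg) * (W n \<bullet> v)" .
      have "(\<Sum>j\<in>cls r. w n j * rr n j) = (\<Sum>j\<in>cls r. - (be * sg) * (c n j * \<sigma> j * (pu n j \<bullet> p + pv n j)))"
        using w2 by (rule sum.cong[OF refl])
      also have "\<dots> = - (be * sg) * Lam n p" by (simp add: Lam_def sum_distrib_left)
      finally show ?case using 1 by simp
    qed
    have E1: "eventually (\<lambda>n. (\<Sum>j\<in>cls r. w n j) = (be * (2*\<epsilon>) * sg) * (W n \<bullet> v)) sequentially"
      using E by eventually_elim simp
    have E2: "eventually (\<lambda>n. (\<Sum>j\<in>cls r. w n j * rr n j) = - (be * sg) * Lam n p) sequentially"
      using E by eventually_elim simp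
    have d1: "(\<lambda>n. (be * (2*\<epsilon>) * sg) * (W n \<bullet> v)) \<longlonglongrightarrow> \<kappa> (1/2)"
      using Lim_transform_eventually[OF c1 E1] .
    have d2: "(\<lambda>n. - (be * sg) * Lam n p) \<longlonglongrightarrow> k2"
      using Lim_transform_eventually[OF c2 E2] .
    have nz1: "be * (2*\<epsilon>) * sg \<noteq> 0" using be_pos \<epsilon> sg by simp
    have nz2: "be * sg \<noteq> 0" using be_pos sg by simp
    define m where "m = \<kappa> (1/2) / (be * (2*\<epsilon>) * sg)"
    have Wm: "(\<lambda>n. W n \<bullet> v) \<longlonglongrightarrow> m"
    proof -
      have "(\<lambda>n. ((be * (2*\<epsilon>) * sg) * (W n \<bullet> v)) / (be * (2*\<epsilon>) * sg)) \<longlonglongrightarrow> \<kappa> (1/2) / (be * (2*\<epsilon>) * sg)"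
        by (intro tendsto_intros d1 nz1)
      then show ?thesis using nz1 by (simp add: m_def)
    qed
    have Lpy: "Lam n y = (- (be * sg) * Lam n p) / (- (be * sg)) + \<epsilon> * (W n \<bullet> v)" for n
    proof -
      have "Lam n p = Lam n y + \<epsilon> * (W n \<bullet> (-v))" unfolding p_def by (rule Lam_shift)
      then show ?thesis using nz2 by (simp add: inner_minus_right)
    qed
    have "(\<lambda>n. (- (be * sg) * Lam n p) / (- (be * sg)) + \<epsilon> * (W n \<bullet> v)) \<longlonglongrightarrow>
          k2 / (- (be * sg)) + \<epsilon> * m"
      using nz2 by (intro tendsto_intros d2 Wm) simp
    moreover have "k2 / (- (be * sg)) + \<epsilon> * m = 0"
      using nz2 \<epsilon> sg be_pos by (simp add: m_def k2_def field_simps)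
    ultimately have "(\<lambda>n. Lam n y) \<longlonglongrightarrow> 0" unfolding Lpy[symmetric] by simp
    then show ?thesis using Wm by blast
  qed
  obtain x0 where x0: "pure r x0" using pure_exists[OF r] by blast
  have conv_all: "convergent (\<lambda>n. W n \<bullet> v)" for v
  proof (cases "U r \<bullet> v = 0")
    case False
    then show ?thesis using K[OF x0 False] by (auto simp: convergent_def)
  next
    case True
    have a: "U r \<bullet> (v + U r) \<noteq> 0" using True urr by (simp add: inner_add_right)
    obtain m1 where m1: "(\<lambda>n. W n \<bullet> (v + U r)) \<longlonglongrightarrow> m1" using K[OF x0 a] by blast
    obtain m2 where m2: "(\<lambda>n. W n \<bullet> U r) \<longlonglongrightarrow> m2" using K[OF x0 urr] by blast
    have "(\<lambda>n. W n \<bullet> (v + U r) - W n \<bullet> U r) \<longlonglongrightarrow> m1 - m2" by (intro tendsto_intros m1 m2)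
    then show ?thesis by (auto simp: convergent_def inner_add_right)
  qed
  define \<mu> where "\<mu> v = lim (\<lambda>n. W n \<bullet> v)" for v
  have Wconv: "(\<lambda>n. W n \<bullet> v) \<longlonglongrightarrow> \<mu> v" for v
    using conv_all[of v] by (simp add: \<mu>_def convergent_LIMSEQ_iff)
  have \<mu>0: "\<mu> w = 0" if w: "U r \<bullet> w = 0" for w
  proof -
    obtain t where t: "t > 0" "pure r (x0 + t *\<^sub>R w)" using pure_perturb[OF x0 w] by blast
    have l1: "(\<lambda>n. Lam n (x0 + t *\<^sub>R w)) \<longlonglongrightarrow> 0" using K[OF t(2) urr] by blast
    have l2: "(\<lambda>n. Lam n x0) \<longlonglongrightarrow> 0" using K[OF x0 urr] by blast
    have "(\<lambda>n. Lam n (x0 + t *\<^sub>R w) - Lam n x0) \<longlonglongrightarrow> 0 - 0" by (intro tendsto_intros l1 l2)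
    then have "(\<lambda>n. t * (W n \<bullet> w)) \<longlonglongrightarrow> 0" by (simp add: Lam_shift)
    moreover have "(\<lambda>n. t * (W n \<bullet> w)) \<longlonglongrightarrow> t * \<mu> w" by (intro tendsto_intros Wconv)
    ultimately have "t * \<mu> w = 0" using LIMSEQ_unique by blast
    then show ?thesis using t by simp
  qed
  define lam where "lam = \<mu> (U r) / (U r \<bullet> U r)"
  have "(\<lambda>n. \<Sum>j\<in>cls r. c n j * \<bar>pu n j \<bullet> v\<bar>) \<longlonglongrightarrow> lam * \<bar>U r \<bullet> v\<bar>" if v: "U r \<bullet> v \<noteq> 0" for v
  proof -
    define w' where "w' = v - ((U r \<bullet> v) / (U r \<bullet> U r)) *\<^sub>R U r"
    have w'0: "U r \<bullet> w' = 0" using urr by (simp add: w'_def inner_diff_right)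
    have dec: "W n \<bullet> v = W n \<bullet> w' + ((U r \<bullet> v) / (U r \<bullet> U r)) * (W n \<bullet> U r)" for n
      by (simp add: w'_def inner_diff_right)
    have "(\<lambda>n. W n \<bullet> w' + ((U r \<bullet> v) / (U r \<bullet> U r)) * (W n \<bullet> U r)) \<longlonglongrightarrow> \<mu> w' + ((U r \<bullet> v) / (U r \<bullet> U r)) * \<mu> (U r)"
      by (intro tendsto_intros Wconv)
    then have "(\<lambda>n. W n \<bullet> v) \<longlonglongrightarrow> \<mu> w' + ((U r \<bullet> v) / (U r \<bullet> U r)) * \<mu> (U r)"
      unfolding dec .
    then have "(\<lambda>n. W n \<bullet> v) \<longlonglongrightarrow> (U r \<bullet> v) * lam"
      using \<mu>0[OF w'0] by (simp add: lam_def)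
    then have t1: "(\<lambda>n. sgn (U r \<bullet> v) * (W n \<bullet> v)) \<longlonglongrightarrow> sgn (U r \<bullet> v) * ((U r \<bullet> v) * lam)"
      by (intro tendsto_intros)
    have ev: "eventually (\<lambda>n. sgn (U r \<bullet> v) * (W n \<bullet> v) = (\<Sum>j\<in>cls r. c n j * \<bar>pu n j \<bullet> v\<bar>)) sequentially"
      using absid[OF v]
    proof eventually_elim
      case (elim n)
      have "(\<Sum>j\<in>cls r. c n j * \<bar>pu n j \<bullet> v\<bar>) = (\<Sum>j\<in>cls r. sgn (U r \<bullet> v) * (c n j * \<sigma> j * (pu n j \<bullet> v)))"
        by (rule sum.cong) (use elim in auto)
      also have "\<dots> = sgn (U r \<bullet> v) * (W n \<bullet> v)" by (simp add: Winner sum_distrib_left)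
      finally show ?case by simp
    qed
    have eq: "sgn (U r \<bullet> v) * ((U r \<bullet> v) * lam) = lam * \<bar>U r \<bullet> v\<bar>"
      by (auto simp: sgn_real_def)
    show ?thesis using Lim_transform_eventually[OF t1 ev] unfolding eq .
  qed
  then show ?thesis by blast
qed

end


lemma affine_cube:
  fixes h :: "real^'d \<Rightarrow> real" and B :: real
  assumes B: "B > 0"
    and seg: "\<And>p q s. p \<in> cube B \<Longrightarrow> q \<in> cube B \<Longrightarrow> 0 \<le> s \<Longrightarrow> s \<le> 1 \<Longrightarrow>
                h (p + s *\<^sub>R (q - p)) = (1-s) * h p + s * h q"
  shows "\<exists>w b. \<forall>x\<in>cube B. h x = w \<bullet> x + b"
proof -
  define b where "b = h 0"
  define wv :: "real^'d" where "wv = (\<chi> i. (h (B *\<^sub>R axis i 1) - h 0) / B)"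
  have zc: "(0::real^'d) \<in> cube B" using B by (simp add: cube_def)
  have axc: "t *\<^sub>R axis k 1 \<in> cube B" if "\<bar>t\<bar> \<le> B" for t k
    using that B by (auto simp: cube_def axis_def abs_le_iff)
  have oneD: "h (t *\<^sub>R axis k 1) = b + wv$k * t" if t: "\<bar>t\<bar> \<le> B" for t k
  proof -
    define q where "q = B *\<^sub>R axis k (1::real)"
    define q' where "q' = (-B) *\<^sub>R axis k (1::real)"
    have qc1: "q \<in> cube B" unfolding q_def by (rule axc) (use B in simp)
    have qc2: "q' \<in> cube B" unfolding q'_def by (rule axc) (use B in simp)
    note qc = qc1 qc2
    have mid: "h 0 = (1 - 1/2) * h q' + (1/2) * h q"
    proof -
      have "q' + (1/2) *\<^sub>R (q - q') = 0" by (simp add: q_def q'_def vec_eq_iff axis_def)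
      then show ?thesis using seg[OF qc(2) qc(1), of "1/2"] by simp
    qed
    show ?thesis
    proof (cases "t \<ge> 0")
      case True
      have s01: "0 \<le> t/B" "t/B \<le> 1" using t True B by auto
      have "0 + (t/B) *\<^sub>R (q - 0) = t *\<^sub>R axis k 1" using B by (simp add: q_def)
      then have "h (t *\<^sub>R axis k 1) = (1 - t/B) * h 0 + (t/B) * h q"
        using seg[OF zc qc(1) s01] by simp
      then show ?thesis using B by (simp add: b_def wv_def q_def field_simps)
    next
      case False
      have s01: "0 \<le> -t/B" "-t/B \<le> 1" using t False B by (auto simp: divide_le_eq le_divide_eq abs_le_iff)
      have "0 + (-t/B) *\<^sub>R (q' - 0) = t *\<^sub>R axis k 1" using B by (simp add: q'_def)
      then have "h (t *\<^sub>R axis k 1) = (1 - (-t/B)) * h 0 + (-t/B) * h q'"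
        using seg[OF zc qc(2) s01] by simp
      moreover have "h q' = 2 * h 0 - h q" using mid by simp
      ultimately have "h (t *\<^sub>R axis k 1) = (1 - (-t/B)) * h 0 + (-t/B) * (2 * h 0 - h q)" by simp
      also have "\<dots> = h 0 + t * ((h q - h 0) / B)" using B by (simp add: field_simps)
      finally show ?thesis by (simp add: b_def wv_def q_def)
    qed
  qed
  have ind: "\<forall>x\<in>cube B. (\<forall>i. i \<notin> S \<longrightarrow> x$i = 0) \<longrightarrow> h x = b + (\<Sum>i\<in>S. wv$i * x$i)"
    if "finite S" for S
    using that
  proof (induction S rule: finite_induct)
    case empty
    show ?case
    proof (intro ballI impI)
      fix x :: "real^'d" assume "\<forall>i. i \<notin> {} \<longrightarrow> x$i = 0"
      then have "x = 0" by (simp add: vec_eq_iff)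
      then show "h x = b + (\<Sum>i\<in>{}. wv$i * x$i)" by (simp add: b_def)
    qed
  next
    case (insert k S)
    show ?case
    proof (intro ballI impI)
      fix x :: "real^'d" assume x: "x \<in> cube B" and sup: "\<forall>i. i \<notin> insert k S \<longrightarrow> x$i = 0"
      define y where "y = (x$k) *\<^sub>R axis k (1::real)"
      define x' where "x' = x - y"
      have "- B \<le> x$k \<and> x$k \<le> B" using x unfolding cube_def by blast
      then have xk: "\<bar>x$k\<bar> \<le> B" by (simp add: abs_le_iff)
      have yc: "y \<in> cube B" using axc[OF xk] by (simp add: y_def)
      have x'i: "x'$i = (if i = k then 0 else x$i)" for i by (simp add: x'_def y_def axis_def)
      have x'c: "x' \<in> cube B" using x B by (auto simp: cube_def x'i)
      have x'sup: "\<forall>i. i \<notin> S \<longrightarrow> x'$i = 0" using sup by (auto simp: x'i)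
      have hx': "h x' = b + (\<Sum>i\<in>S. wv$i * x$i)"
      proof -
        have "h x' = b + (\<Sum>i\<in>S. wv$i * x'$i)" using insert.IH x'c x'sup by blast
        also have "(\<Sum>i\<in>S. wv$i * x'$i) = (\<Sum>i\<in>S. wv$i * x$i)"
          using insert.hyps(2) by (intro sum.cong) (auto simp: x'i)
        finally show ?thesis .
      qed
      have hy: "h y = b + wv$k * x$k" using oneD[OF xk] by (simp add: y_def)
      have m1: "h ((1/2) *\<^sub>R x) = (1 - 1/2) * h x' + (1/2) * h y"
      proof -
        have "x' + (1/2) *\<^sub>R (y - x') = (1/2) *\<^sub>R x" by (simp add: x'_def vec_eq_iff algebra_simps)
        then show ?thesis using seg[OF x'c yc, of "1/2"] by simp
      qed
      have m2: "h ((1/2) *\<^sub>R x) = (1 - 1/2) * h 0 + (1/2) * h x"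
      proof -
        have "0 + (1/2) *\<^sub>R (x - 0) = (1/2) *\<^sub>R x" by simp
        then show ?thesis using seg[OF zc x, of "1/2"] by simp
      qed
      have "h x = h x' + h y - b" using m1 m2 by (simp add: b_def)
      then show "h x = b + (\<Sum>i\<in>insert k S. wv$i * x$i)"
        using hx' hy insert.hyps by simp
    qed
  qed
  have "h x = wv \<bullet> x + b" if x: "x \<in> cube B" for x
  proof -
    have "h x = b + (\<Sum>i\<in>UNIV. wv$i * x$i)" using ind[of UNIV] x by simp
    then show ?thesis by (simp add: inner_vec_def)
  qed
  then show ?thesis by blast
qed


lemma relu_cont: "continuous_on S f \<Longrightarrow> continuous_on S (\<lambda>x. relu (f x))"
  unfolding relu_def by (intro continuous_intros)

lemma seq_conv_aux:
  fixes X :: "nat \<Rightarrow> 'a::metric_space"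
  assumes "\<And>k. dist (X k) l < 1 / real (Suc k)"
  shows "X \<longlonglongrightarrow> l"
proof (rule tendstoI)
  fix e :: real assume e: "e > 0"
  obtain K where K: "inverse (real (Suc K)) < e" using reals_Archimedean[OF e] by blast
  show "eventually (\<lambda>k. dist (X k) l < e) sequentially"
    unfolding eventually_sequentially
  proof (intro exI allI impI)
    fix k assume "K \<le> k"
    then have "1 / real (Suc k) \<le> 1 / real (Suc K)" by (simp add: frac_le)
    then show "dist (X k) l < e" using assms[of k] K by (simp add: inverse_eq_divide)
  qed
qed

context setting
begin

definition "R = {r. r < N \<and> crossing r \<and> (\<forall>k<r. \<not> same r k)}"
definition "lam r = (SOME l. \<forall>v. U r \<bullet> v \<noteq> 0 \<longrightarrow> (\<lambda>n. \<Sum>j\<in>cls r. c n j * \<bar>pu n j \<bullet> v\<bar>) \<longlonglongrightarrow> l * \<bar>U r \<bullet> v\<bar>)"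
definition "rep j = (LEAST k. same j k)"

lemma lam_prop: assumes "r < N" "crossing r" "U r \<bullet> v \<noteq> 0"
  shows "(\<lambda>n. \<Sum>j\<in>cls r. c n j * \<bar>pu n j \<bullet> v\<bar>) \<longlonglongrightarrow> lam r * \<bar>U r \<bullet> v\<bar>"
proof -
  have "\<forall>v. U r \<bullet> v \<noteq> 0 \<longrightarrow> (\<lambda>n. \<Sum>j\<in>cls r. c n j * \<bar>pu n j \<bullet> v\<bar>) \<longlonglongrightarrow> lam r * \<bar>U r \<bullet> v\<bar>"
    unfolding lam_def by (rule someI_ex) (rule class_lemma[OF assms(1,2)])
  then show ?thesis using assms(3) by blast
qed

lemma same_unif: "same j k \<Longrightarrow> (\<forall>x. L k x = L j x) \<or> (\<forall>x. L k x = - L j x)"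
  by (auto simp: same_def L_def)

lemma crossing_same: assumes "same j k" "crossing j" shows "crossing k"
proof -
  obtain x where x: "x \<in> ocube B" "L j x = 0" using assms(2) by (auto simp: crossing_def)
  then have "L k x = 0" using same_unif[OF assms(1)] by auto
  then show ?thesis using x by (auto simp: crossing_def)
qed

lemma rep_same: "same j (rep j)" unfolding rep_def by (rule LeastI[of "same j" j]) (rule same_refl)
lemma rep_le: "rep j \<le> j" unfolding rep_def by (rule Least_le) (rule same_refl)
lemma rep_min: "k < rep j \<Longrightarrow> \<not> same j k" unfolding rep_def by (rule not_less_Least)
lemma rep_eq: assumes "same j k" shows "rep j = rep k"
proof -
  have "same j = same k" using assms same_sym same_trans by (intro ext) blast
  then show ?thesis by (simp add: rep_def)
qed

lemma rep_R: assumes "j < N" "crossing j" shows "rep j \<in> R"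
proof -
  have "rep j < N" using rep_le[of j] assms by simp
  moreover have "crossing (rep j)" using crossing_same[OF rep_same assms(2)] .
  moreover have "\<not> same (rep j) k" if "k < rep j" for k
    using rep_min[OF that] same_trans[OF rep_same[of j]] by blast
  ultimately show ?thesis by (simp add: R_def)
qed

lemma rep_of_R: assumes "r \<in> R" shows "rep r = r"
proof (rule ccontr)
  assume "rep r \<noteq> r"
  then have "rep r < r" using rep_le[of r] by simp
  then show False using assms rep_same[of r] by (auto simp: R_def)
qed

lemma R_sub: "R \<subseteq> {..<N}" by (auto simp: R_def)

lemma decomp: "\<exists>w b. \<forall>x\<in>cube B. g x = w \<bullet> x + b + be * (\<Sum>r\<in>R. lam r * relu (L r x))"
proof -
  define h where "h x = g x - be * (\<Sum>r\<in>R. lam r * relu (L r x))" for x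
  have finR: "finite R" using R_sub finite_subset by blast
  have hcont: "continuous_on (cube B) h" unfolding h_def L_def
    by (intro continuous_intros relu_cont gcont)
  have seg_gen: "h (p + s *\<^sub>R (q - p)) = (1-s) * h p + s * h q"
    if pq: "p \<in> ocube B" "q \<in> ocube B" and gen: "\<And>k. k<N \<Longrightarrow> L k p \<noteq> 0 \<and> L k q \<noteq> 0"
      and s: "0 \<le> s" "s \<le> 1" for p q s
  proof -
    have pqc: "p \<in> cube B" "q \<in> cube B" using pq ocube_sub by auto
    define J' where "J' = {j\<in>{..<N}. L j p * L j q < 0}"
    define sh where "sh j = L j p / (L j p - L j q)" for j
    define rr where "rr n j = (pu n j \<bullet> p + pv n j) / ((pu n j \<bullet> p + pv n j) - (pu n j \<bullet> q + pv n j))" for n j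
    define wt where "wt n j = be * c n j * \<bar>pu n j \<bullet> (q - p)\<bar>" for n j
    obtain \<kappa> A0 B0 where kap: "\<forall>z. (\<lambda>n. \<Sum>j\<in>{j\<in>J'. sh j = z}. wt n j) \<longlonglongrightarrow> \<kappa> z \<and>
                 (\<lambda>n. \<Sum>j\<in>{j\<in>J'. sh j = z}. wt n j * rr n j) \<longlonglongrightarrow> \<kappa> z * z"
      and form: "\<forall>s\<in>{0..1}. g (p + s *\<^sub>R (q - p)) = A0 + B0 * s + (\<Sum>z\<in>sh`J'. \<kappa> z * relu(s - z))"
      using segment[OF pqc gen J'_def sh_def rr_def wt_def] by blast
    define v where "v = q - p"
    have Lq: "L j q = L j p + U j \<bullet> v" for j by (simp add: v_def L_def inner_diff_right)
    have Lps: "L j (p + t *\<^sub>R v) = (1-t) * L j p + t * L j q" for j t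
      by (simp add: L_shift Lq algebra_simps)
    have J'N: "j < N" if "j \<in> J'" for j using that by (simp add: J'_def)
    have J'neg: "L j p * L j q < 0" if "j \<in> J'" for j using that by (simp add: J'_def)
    have J'Uv: "U j \<bullet> v \<noteq> 0" if j: "j \<in> J'" for j
    proof
      assume "U j \<bullet> v = 0"
      then have "L j p * L j q = (L j p)^2" using Lq[of j] by (simp add: power2_eq_square)
      then show False using J'neg[OF j] zero_le_power2[of "L j p"] by linarith
    qed
    have J'd: "L j p - L j q \<noteq> 0" if j: "j \<in> J'" for j using J'Uv[OF j] Lq[of j] by simp
    have J'sh: "0 < sh j \<and> sh j < 1" if j: "j \<in> J'" for j
    proof -
      have m: "L j p * L j q < 0" using J'neg[OF j] .
      show ?thesis
      proof (cases "L j p > 0")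
        case True
        then have "L j q < 0" using m by (simp add: mult_less_0_iff)
        then show ?thesis using True by (simp add: sh_def divide_less_eq)
      next
        case False
        then have "L j p < 0" "L j q > 0" using m by (auto simp: mult_less_0_iff)
        then show ?thesis by (simp add: sh_def divide_less_eq zero_less_divide_iff)
      qed
    qed
    have J'cross: "crossing j" if j: "j \<in> J'" for j
    proof -
      have "p + sh j *\<^sub>R v \<in> ocube B" using ocube_seg[OF pq] J'sh[OF j] by (simp add: v_def)
      moreover have "L j (p + sh j *\<^sub>R v) = 0"
        unfolding Lps using J'd[OF j] by (simp add: sh_def field_simps)
      ultimately show ?thesis by (auto simp: crossing_def)
    qed
    have same_J': "k \<in> J' \<and> sh k = sh j" if sj: "same j k" and j: "j \<in> J'" and k: "k < N" for j k
    proof -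
      from same_unif[OF sj] show ?thesis
      proof
        assume "\<forall>x. L k x = L j x" then show ?thesis using j k by (simp add: J'_def sh_def)
      next
        assume h: "\<forall>x. L k x = - L j x"
        then have "L k p * L k q = L j p * L j q" by simp
        moreover have "sh k = sh j"
        proof -
          have "sh k = (- L j p) / (- L j p - - L j q)" using h by (simp add: sh_def)
          also have "\<dots> = L j p / (L j p - L j q)"
            by (metis minus_divide_divide minus_diff_eq diff_minus_eq_add uminus_add_conv_diff)
          finally show ?thesis by (simp add: sh_def)
        qed
        ultimately show ?thesis using j k by (simp add: J'_def)
      qed
    qed
    have part: "(\<Sum>j\<in>{j\<in>J'. sh j = z}. wt n j) = (\<Sum>r\<in>{r\<in>R\<inter>J'. sh r = z}. \<Sum>j\<in>cls r. wt n j)" for n z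
    proof -
      define S where "S = {j\<in>J'. sh j = z}"
      define T where "T = {r\<in>R\<inter>J'. sh r = z}"
      have fS: "finite S" by (simp add: S_def J'_def)
      have fT: "finite T" using finR by (simp add: T_def)
      have img: "rep ` S \<subseteq> T"
      proof
        fix r assume "r \<in> rep ` S"
        then obtain j where j: "j \<in> S" "r = rep j" by blast
        have jJ: "j \<in> J'" "sh j = z" using j by (auto simp: S_def)
        have "rep j \<in> R" using rep_R[OF J'N[OF jJ(1)] J'cross[OF jJ(1)]] .
        moreover have "rep j < N" using calculation R_sub by auto
        ultimately show "r \<in> T" using same_J'[OF rep_same jJ(1)] jJ j by (auto simp: T_def)
      qed
      have grp: "{j\<in>S. rep j = r} = cls r" if r: "r \<in> T" for r
      proof
        show "{j\<in>S. rep j = r} \<subseteq> cls r"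
        proof
          fix j assume "j \<in> {j\<in>S. rep j = r}"
          then have j: "j \<in> J'" "rep j = r" by (auto simp: S_def)
          have "same r j" using rep_same[of j] j same_sym by auto
          then show "j \<in> cls r" using J'N[OF j(1)] by (simp add: cls_def)
        qed
        show "cls r \<subseteq> {j\<in>S. rep j = r}"
        proof
          fix j assume "j \<in> cls r"
          then have sj: "same r j" and jN: "j < N" by (auto simp: cls_def)
          have rT: "r \<in> R" "r \<in> J'" "sh r = z" using r by (auto simp: T_def)
          have "j \<in> J' \<and> sh j = sh r" using same_J'[OF sj rT(2) jN] .
          moreover have "rep j = r" using rep_eq[OF sj] rep_of_R[OF rT(1)] by simp
          ultimately show "j \<in> {j\<in>S. rep j = r}" using rT by (simp add: S_def)
        qed
      qed
      have "(\<Sum>j\<in>S. wt n j) = (\<Sum>r\<in>T. \<Sum>j\<in>{j\<in>S. rep j = r}. wt n j)"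
        using sum.group[OF fS fT img, of "wt n"] by simp
      also have "\<dots> = (\<Sum>r\<in>T. \<Sum>j\<in>cls r. wt n j)" by (rule sum.cong) (simp_all add: grp)
      finally show ?thesis by (simp add: S_def T_def)
    qed
    have dlim: "(\<lambda>n. \<Sum>j\<in>cls r. wt n j) \<longlonglongrightarrow> be * (lam r * \<bar>U r \<bullet> v\<bar>)" if r: "r \<in> R \<inter> J'" for r
    proof -
      have rN: "r < N" "crossing r" using r by (auto simp: R_def)
      have "(\<lambda>n. be * (\<Sum>j\<in>cls r. c n j * \<bar>pu n j \<bullet> v\<bar>)) \<longlonglongrightarrow> be * (lam r * \<bar>U r \<bullet> v\<bar>)"
        using lam_prop[OF rN J'Uv] r by (intro tendsto_intros) auto
      moreover have "(\<Sum>j\<in>cls r. wt n j) = be * (\<Sum>j\<in>cls r. c n j * \<bar>pu n j \<bullet> v\<bar>)" for n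
        by (simp add: wt_def v_def sum_distrib_left mult.assoc)
      ultimately show ?thesis by simp
    qed
    have kz: "\<kappa> z = (\<Sum>r\<in>{r\<in>R\<inter>J'. sh r = z}. be * (lam r * \<bar>U r \<bullet> v\<bar>))" for z
    proof -
      have "(\<lambda>n. \<Sum>j\<in>{j\<in>J'. sh j = z}. wt n j) \<longlonglongrightarrow> \<kappa> z" using kap by blast
      moreover have "(\<lambda>n. \<Sum>j\<in>{j\<in>J'. sh j = z}. wt n j) \<longlonglongrightarrow> (\<Sum>r\<in>{r\<in>R\<inter>J'. sh r = z}. be * (lam r * \<bar>U r \<bullet> v\<bar>))"
        unfolding part by (intro tendsto_sum dlim) auto
      ultimately show ?thesis using LIMSEQ_unique by blast
    qed
    have fsum: "(\<Sum>z\<in>sh`J'. \<kappa> z * relu (t - z)) = (\<Sum>r\<in>R\<inter>J'. be * (lam r * \<bar>U r \<bullet> v\<bar>) * relu (t - sh r))" for t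
    proof -
      have fJ: "finite (sh`J')" by (simp add: J'_def)
      have fRJ: "finite (R\<inter>J')" using finR by simp
      have img: "sh ` (R\<inter>J') \<subseteq> sh ` J'" by auto
      have "(\<Sum>z\<in>sh`J'. \<kappa> z * relu (t - z)) = (\<Sum>z\<in>sh`J'. \<Sum>r\<in>{r\<in>R\<inter>J'. sh r = z}. be * (lam r * \<bar>U r \<bullet> v\<bar>) * relu (t - sh r))"
        by (rule sum.cong) (auto simp: kz sum_distrib_right)
      also have "\<dots> = (\<Sum>r\<in>R\<inter>J'. be * (lam r * \<bar>U r \<bullet> v\<bar>) * relu (t - sh r))"
        by (rule sum.group[OF fRJ fJ img])
      finally show ?thesis .
    qed
    define Af where "Af r t = (if r \<in> J' then (if L r p > 0 then (1-t) * L r p + t * L r q else 0)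
                               else (1-t) * relu (L r p) + t * relu (L r q))" for r t
    have reluL: "relu (L r (p + t *\<^sub>R v)) = (if r\<in>J' then \<bar>U r \<bullet> v\<bar> * relu (t - sh r) else 0) + Af r t"
      if r: "r \<in> R" and t: "0 \<le> t" "t \<le> 1" for r t
    proof (cases "r \<in> J'")
      case True
      have "\<bar>L r q - L r p\<bar> = \<bar>U r \<bullet> v\<bar>" using Lq[of r] by simp
      then show ?thesis unfolding Lps relu_seg[OF J'neg[OF True]] using True
        by (simp add: Af_def sh_def)
    next
      case False
      have "r < N" using r R_sub by auto
      then have "L r p * L r q \<ge> 0" using False by (auto simp: J'_def)
      then show ?thesis unfolding Lps relu_seg2[OF \<open>L r p * L r q \<ge> 0\<close> t] using False by (simp add: Af_def)
    qed
    have Aflin: "Af r t = Af r 0 + t * (Af r 1 - Af r 0)" for r t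
      by (auto simp: Af_def algebra_simps)
    define C0 where "C0 = A0 - be * (\<Sum>r\<in>R. lam r * Af r 0)"
    define C1 where "C1 = B0 - be * (\<Sum>r\<in>R. lam r * (Af r 1 - Af r 0))"
    have hform: "h (p + t *\<^sub>R v) = C0 + C1 * t" if t: "0 \<le> t" "t \<le> 1" for t
    proof -
      define S1 where "S1 = (\<Sum>r\<in>R\<inter>J'. lam r * (\<bar>U r \<bullet> v\<bar> * relu (t - sh r)))"
      have e1: "(\<Sum>r\<in>R\<inter>J'. be * (lam r * \<bar>U r \<bullet> v\<bar>) * relu (t - sh r)) = be * S1"
        by (simp add: S1_def sum_distrib_left mult.assoc)
      have "g (p + t *\<^sub>R v) = A0 + B0 * t + be * S1" using form t fsum e1 by (simp add: v_def)
      moreover have "(\<Sum>r\<in>R. lam r * relu (L r (p + t *\<^sub>R v))) =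
          (\<Sum>r\<in>R. lam r * (if r\<in>J' then \<bar>U r \<bullet> v\<bar> * relu (t - sh r) else 0)) + (\<Sum>r\<in>R. lam r * Af r t)"
        unfolding sum.distrib[symmetric] by (rule sum.cong) (simp_all add: reluL t distrib_left)
      moreover have "(\<Sum>r\<in>R. lam r * (if r\<in>J' then \<bar>U r \<bullet> v\<bar> * relu (t - sh r) else 0)) = S1"
        unfolding S1_def sum.inter_restrict[OF finR] by (rule sum.cong) auto
      moreover have "(\<Sum>r\<in>R. lam r * Af r t) = (\<Sum>r\<in>R. lam r * Af r 0) + t * (\<Sum>r\<in>R. lam r * (Af r 1 - Af r 0))"
      proof -
        have "(\<Sum>r\<in>R. lam r * Af r t) = (\<Sum>r\<in>R. lam r * Af r 0 + t * (lam r * (Af r 1 - Af r 0)))"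
        proof (rule sum.cong[OF refl])
          fix r show "lam r * Af r t = lam r * Af r 0 + t * (lam r * (Af r 1 - Af r 0))"
            by (subst Aflin[of r t]) (simp add: algebra_simps)
        qed
        also have "\<dots> = (\<Sum>r\<in>R. lam r * Af r 0) + t * (\<Sum>r\<in>R. lam r * (Af r 1 - Af r 0))"
          by (simp add: sum.distrib sum_distrib_left)
        finally show ?thesis .
      qed
      ultimately show ?thesis by (simp add: h_def C0_def C1_def algebra_simps)
    qed
    have hp: "h p = C0" using hform[of 0] by simp
    have hq: "h q = C0 + C1" using hform[of 1] by (simp add: v_def)
    show ?thesis using hform[OF s] hp hq by (simp add: v_def algebra_simps)
  qed
  have seg_all: "h (p + s *\<^sub>R (q - p)) = (1-s) * h p + s * h q"
    if p: "p \<in> cube B" and q: "q \<in> cube B" and s: "0 \<le> s" "s \<le> 1" for p q s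
  proof -
    have "\<forall>k. \<exists>y. y \<in> ocube B \<and> dist p y < 1 / real (Suc k) \<and> (\<forall>j<N. L j y \<noteq> 0)"
    proof
      fix k :: nat
      have "1 / real (Suc k) > 0" by simp
      from generic_near[OF p this] show "\<exists>y. y \<in> ocube B \<and> dist p y < 1 / real (Suc k) \<and> (\<forall>j<N. L j y \<noteq> 0)"
        by blast
    qed
    then obtain P where P: "\<forall>k. P k \<in> ocube B \<and> dist p (P k) < 1 / real (Suc k) \<and> (\<forall>j<N. L j (P k) \<noteq> 0)"
      by metis
    have "\<forall>k. \<exists>y. y \<in> ocube B \<and> dist q y < 1 / real (Suc k) \<and> (\<forall>j<N. L j y \<noteq> 0)"
    proof
      fix k :: nat
      have "1 / real (Suc k) > 0" by simp
      from generic_near[OF q this] show "\<exists>y. y \<in> ocube B \<and> dist q y < 1 / real (Suc k) \<and> (\<forall>j<N. L j y \<noteq> 0)"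
        by blast
    qed
    then obtain Q where Q: "\<forall>k. Q k \<in> ocube B \<and> dist q (Q k) < 1 / real (Suc k) \<and> (\<forall>j<N. L j (Q k) \<noteq> 0)"
      by metis
    have Pc: "P \<longlonglongrightarrow> p" by (rule seq_conv_aux) (use P in \<open>simp add: dist_commute\<close>)
    have Qc: "Q \<longlonglongrightarrow> q" by (rule seq_conv_aux) (use Q in \<open>simp add: dist_commute\<close>)
    have PQcube: "P k \<in> cube B" "Q k \<in> cube B" for k
      using subsetD[OF ocube_sub, of "P k" B] subsetD[OF ocube_sub, of "Q k" B] P Q by blast+
    have Hs: "(\<lambda>n. h (X n)) \<longlonglongrightarrow> h a" if "X \<longlonglongrightarrow> a" "\<forall>n. X n \<in> cube B" "a \<in> cube B" for X a
      using hcont that unfolding continuous_on_sequentially comp_def by blast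
    have eq: "h (P k + s *\<^sub>R (Q k - P k)) = (1-s) * h (P k) + s * h (Q k)" for k
      using seg_gen[of "P k" "Q k" s] P Q s by auto
    have c1: "(\<lambda>k. h (P k + s *\<^sub>R (Q k - P k))) \<longlonglongrightarrow> h (p + s *\<^sub>R (q - p))"
    proof -
      have "(\<lambda>k. P k + s *\<^sub>R (Q k - P k)) \<longlonglongrightarrow> p + s *\<^sub>R (q - p)" by (intro tendsto_intros Pc Qc)
      moreover have "\<forall>k. P k + s *\<^sub>R (Q k - P k) \<in> cube B" using cube_seg[OF PQcube s] by blast
      moreover have "p + s *\<^sub>R (q - p) \<in> cube B" using cube_seg[OF p q s] .
      ultimately show ?thesis by (intro Hs)
    qed
    have c2: "(\<lambda>k. (1-s) * h (P k) + s * h (Q k)) \<longlonglongrightarrow> (1-s) * h p + s * h q"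
    proof -
      have "(\<lambda>k. h (P k)) \<longlonglongrightarrow> h p" using p PQcube Pc by (intro Hs) auto
      moreover have "(\<lambda>k. h (Q k)) \<longlonglongrightarrow> h q" using q PQcube Qc by (intro Hs) auto
      ultimately show ?thesis by (intro tendsto_intros)
    qed
    show ?thesis using c1 c2 unfolding eq using LIMSEQ_unique by blast
  qed
  obtain w b where wb: "\<forall>x\<in>cube B. h x = w \<bullet> x + b" using affine_cube[OF Bpos seg_all] by blast
  then show ?thesis by (auto simp: h_def intro!: exI[of _ w] exI[of _ b])
qed

end


lemma subseq_finite:
  fixes X :: "nat \<Rightarrow> nat \<Rightarrow> 'a::heine_borel"
  shows "(\<forall>j<N. bounded (range (\<lambda>n. X n j))) \<Longrightarrow> \<exists>\<sigma> l. strict_mono \<sigma> \<and> (\<forall>j<N. (\<lambda>n. X (\<sigma> n) j) \<longlonglongrightarrow> l j)"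
proof (induction N)
  case 0
  show ?case by (rule exI[of _ id]) (auto simp: strict_mono_def)
next
  case (Suc N)
  then obtain \<sigma>1 l where s1: "strict_mono \<sigma>1" "\<forall>j<N. (\<lambda>n. X (\<sigma>1 n) j) \<longlonglongrightarrow> l j" by auto
  have "bounded (range (\<lambda>n. X n N))" using Suc.prems by simp
  then have "bounded (range (\<lambda>n. X (\<sigma>1 n) N))" by (rule bounded_subset) auto
  then obtain l' \<sigma>2 where s2: "strict_mono \<sigma>2" "((\<lambda>n. X (\<sigma>1 n) N) \<circ> \<sigma>2) \<longlonglongrightarrow> l'"
    using bounded_imp_convergent_subsequence by blast
  define \<sigma> where "\<sigma> = \<sigma>1 \<circ> \<sigma>2"
  have "strict_mono \<sigma>" using s1(1) s2(1) unfolding strict_mono_def \<sigma>_def comp_def by simp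
  moreover have "\<forall>j<Suc N. (\<lambda>n. X (\<sigma> n) j) \<longlonglongrightarrow> (l(N := l')) j"
  proof (intro allI impI)
    fix j assume j: "j < Suc N"
    show "(\<lambda>n. X (\<sigma> n) j) \<longlonglongrightarrow> (l(N := l')) j"
    proof (cases "j = N")
      case True then show ?thesis using s2(2) by (simp add: \<sigma>_def comp_def)
    next
      case False
      then have "j < N" using j by simp
      then have "((\<lambda>n. X (\<sigma>1 n) j) \<circ> \<sigma>2) \<longlonglongrightarrow> l j" using s1(2) s2(1) LIMSEQ_subseq_LIMSEQ by blast
      then show ?thesis using False by (simp add: \<sigma>_def comp_def)
    qed
  qed
  ultimately show ?case by blast
qed

lemma pReLU_zero: "pReLU a 0 = 0" by (simp add: pReLU_def)

lemma pReLU_one: "pReLU 1 y = y" by (simp add: pReLU_def)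

lemma pReLU_pos: assumes "a \<ge> 0" "y \<ge> 0" shows "pReLU a y = max 1 a * y"
proof (cases "a \<le> 1")
  case True
  have "a * y \<le> 1 * y" using True assms by (intro mult_right_mono) auto
  then show ?thesis using True by (simp add: pReLU_def max_def)
next
  case False
  have "1 * y \<le> a * y" using False assms by (intro mult_right_mono) auto
  then show ?thesis using False by (simp add: pReLU_def max_def)
qed

lemma tendsto_pReLU [tendsto_intros]: "(f \<longlongrightarrow> l) F \<Longrightarrow> ((\<lambda>x. pReLU a (f x)) \<longlongrightarrow> pReLU a l) F"
  unfolding pReLU_def by (intro tendsto_intros)

lemma continuous_on_pReLU [continuous_intros]: "continuous_on S f \<Longrightarrow> continuous_on S (\<lambda>x. pReLU a (f x))"
  unfolding pReLU_def by (intro continuous_intros)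

lemma sum_delta0: "0 < (N::nat) \<Longrightarrow> (\<Sum>j<N. (if j = 0 then (1::real) else 0) * y j) = y 0"
proof -
  assume N: "0 < N"
  have "(\<Sum>j<N. (if j = 0 then (1::real) else 0) * y j) = (\<Sum>j\<in>{..<N}. if j = 0 then y j else 0)"
    by (rule sum.cong) auto
  also have "\<dots> = y 0" using N by (subst sum.delta) auto
  finally show ?thesis .
qed

lemma inner_bound:
  fixes w x :: "real^'d"
  assumes "x \<in> cube B"
  shows "\<bar>w \<bullet> x\<bar> \<le> (\<Sum>i\<in>UNIV. \<bar>w $ i\<bar> * B)"
proof -
  have "\<bar>w \<bullet> x\<bar> = \<bar>\<Sum>i\<in>UNIV. w$i * x$i\<bar>" by (simp add: inner_vec_def)
  also have "\<dots> \<le> (\<Sum>i\<in>UNIV. \<bar>w$i * x$i\<bar>)" by (rule sum_abs)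
  also have "\<dots> \<le> (\<Sum>i\<in>UNIV. \<bar>w $ i\<bar> * B)"
  proof (rule sum_mono)
    fix i
    have "-B \<le> x$i \<and> x$i \<le> B" using assms unfolding cube_def by blast
    then have "\<bar>x$i\<bar> \<le> B" by (simp add: abs_le_iff)
    then show "\<bar>w$i * x$i\<bar> \<le> \<bar>w $ i\<bar> * B" by (simp add: abs_mult mult_left_mono)
  qed
  finally show ?thesis .
qed


theorem theorem3p8:
  fixes a B :: real and N0 :: nat
    and f :: "nat \<Rightarrow> real ^ 'd \<Rightarrow> real" and g :: "real ^ 'd \<Rightarrow> real"
  assumes "B > 0" and "a \<ge> 0"
    and "\<forall>n. f n \<in> RNN_shallow a N0 B"
    and "uniform_limit (cube B) f g sequentially"
  shows "g \<in> RNN_shallow a N0 B"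
proof -
  note Bp = assms(1) and ap = assms(2)
  have "\<forall>n. \<exists>A1 b1 A2 b2. \<forall>x\<in>cube B. f n x = (\<Sum>j<N0. A2 j * pReLU a (A1 j \<bullet> x + b1 j)) + b2"
    using assms(3) by (simp add: RNN_shallow_def)
  then obtain A1 b1 A2 b2 where rep: "\<forall>n. \<forall>x\<in>cube B. f n x = (\<Sum>j<N0. A2 n j * pReLU a (A1 n j \<bullet> x + b1 n j)) + b2 n"
    by metis
  have pw: "(\<lambda>n. f n x) \<longlonglongrightarrow> g x" if "x \<in> cube B" for x
    using tendsto_uniform_limitI[OF assms(4) that] .
  have fcont: "continuous_on (cube B) (f n)" for n
  proof -
    have "continuous_on (cube B) (\<lambda>x. (\<Sum>j<N0. A2 n j * pReLU a (A1 n j \<bullet> x + b1 n j)) + b2 n)"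
      by (intro continuous_intros)
    then show ?thesis using rep by (auto intro: continuous_on_eq)
  qed
  have gcont: "continuous_on (cube B) g"
    by (rule uniform_limit_theorem[OF _ assms(4)]) (auto simp: fcont)
  have zc: "(0::real^'d) \<in> cube B" using Bp by (simp add: cube_def)
  show ?thesis
  proof (cases "N0 = 0")
    case True
    have "g x = g 0" if x: "x \<in> cube B" for x
    proof -
      have "(\<lambda>n. b2 n) \<longlonglongrightarrow> g x" using pw[OF x] rep x True by simp
      moreover have "(\<lambda>n. b2 n) \<longlonglongrightarrow> g 0" using pw[OF zc] rep zc True by simp
      ultimately show ?thesis using LIMSEQ_unique by blast
    qed
    then show ?thesis using True unfolding RNN_shallow_def by auto
  next
    case N0: False
    show ?thesis
    proof (cases "a = 1")
      case True
      have fseg: "f n (p + s *\<^sub>R (q - p)) = (1-s) * f n p + s * f n q"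
        if p: "p \<in> cube B" and q: "q \<in> cube B" and s: "0 \<le> s" "s \<le> 1" for n p q s
      proof -
        have ps: "p + s *\<^sub>R (q - p) \<in> cube B" using cube_seg[OF p q s] .
        have "(\<Sum>j<N0. A2 n j * (A1 n j \<bullet> (p + s *\<^sub>R (q - p)) + b1 n j)) =
              (\<Sum>j<N0. (1-s) * (A2 n j * (A1 n j \<bullet> p + b1 n j)) + s * (A2 n j * (A1 n j \<bullet> q + b1 n j)))"
          by (rule sum.cong) (simp_all add: inner_add_right inner_diff_right algebra_simps)
        also have "\<dots> = (1-s) * (\<Sum>j<N0. A2 n j * (A1 n j \<bullet> p + b1 n j)) + s * (\<Sum>j<N0. A2 n j * (A1 n j \<bullet> q + b1 n j))"
          by (simp add: sum.distrib sum_distrib_left)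
        finally show ?thesis using rep p q ps True by (simp add: pReLU_one algebra_simps)
      qed
      have gseg: "g (p + s *\<^sub>R (q - p)) = (1-s) * g p + s * g q"
        if p: "p \<in> cube B" and q: "q \<in> cube B" and s: "0 \<le> s" "s \<le> 1" for p q s
      proof -
        have "(\<lambda>n. f n (p + s *\<^sub>R (q - p))) \<longlonglongrightarrow> g (p + s *\<^sub>R (q - p))" using pw cube_seg[OF p q s] by blast
        moreover have "(\<lambda>n. f n (p + s *\<^sub>R (q - p))) \<longlonglongrightarrow> (1-s) * g p + s * g q"
          unfolding fseg[OF p q s] by (intro tendsto_intros pw p q)
        ultimately show ?thesis using LIMSEQ_unique by blast
      qed
      obtain w b where wb: "\<forall>x\<in>cube B. g x = w \<bullet> x + b" using affine_cube[OF Bp gseg] by blast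
      have gfin: "\<forall>x\<in>cube B. g x = (\<Sum>j<N0. (if j = 0 then (1::real) else 0) * pReLU a ((\<lambda>j. w) j \<bullet> x + (\<lambda>j. 0) j)) + b"
        using wb N0 True by (simp add: sum_delta0 pReLU_one)
      show ?thesis unfolding RNN_shallow_def mem_Collect_eq
        apply (rule exI[of _ "\<lambda>j. w"], rule exI[of _ "\<lambda>j. 0"], rule exI[of _ "\<lambda>j. if j = 0 then (1::real) else 0"], rule exI[of _ b])
        using gfin by simp
    next
      case a1: False
      define nr where "nr n j = sqrt (norm (A1 n j)^2 + (b1 n j)^2)" for n j
      define pu where "pu n j = (if nr n j = 0 then 0 else (1 / nr n j) *\<^sub>R A1 n j)" for n j
      define pv where "pv n j = (if nr n j = 0 then 1 else b1 n j / nr n j)" for n j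
      define cc where "cc n j = A2 n j * nr n j" for n j
      have nr0: "A1 n j = 0 \<and> b1 n j = 0" if "nr n j = 0" for n j
      proof -
        have "norm (A1 n j)^2 + (b1 n j)^2 = 0" using that by (simp add: nr_def)
        then show ?thesis by (simp add: add_nonneg_eq_0_iff)
      qed
      have nrpos: "nr n j > 0" if "nr n j \<noteq> 0" for n j
      proof -
        have "nr n j \<ge> 0" unfolding nr_def by (intro real_sqrt_ge_zero add_nonneg_nonneg) auto
        then show ?thesis using that by linarith
      qed
      have trm: "A2 n j * pReLU a (A1 n j \<bullet> x + b1 n j) = cc n j * pReLU a (pu n j \<bullet> x + pv n j)" for n j x
      proof (cases "nr n j = 0")
        case True then show ?thesis using nr0[OF True] by (simp add: cc_def pReLU_zero)
      next
        case False
        have "A1 n j \<bullet> x + b1 n j = nr n j * (pu n j \<bullet> x + pv n j)"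
          using False by (simp add: pu_def pv_def field_simps)
        then show ?thesis using nrpos[OF False] by (simp add: cc_def pReLU_hom)
      qed
      have Fn: "f n x = (\<Sum>j<N0. cc n j * pReLU a (pu n j \<bullet> x + pv n j)) + b2 n" if "x \<in> cube B" for n x
        using rep that by (simp add: trm)
      have unitn: "norm (pu n j, pv n j) = 1" for n j
      proof (cases "nr n j = 0")
        case True then show ?thesis by (simp add: pu_def pv_def norm_Pair)
      next
        case False
        have np: "nr n j > 0" using nrpos[OF False] .
        have "norm (pu n j)^2 + (pv n j)^2 = (norm (A1 n j)^2 + (b1 n j)^2) / (nr n j)^2"
          using False by (simp add: pu_def pv_def power_divide field_simps)
        also have "\<dots> = 1"
        proof -
          have sq: "(nr n j)^2 = norm (A1 n j)^2 + (b1 n j)^2"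
            unfolding nr_def by (rule real_sqrt_pow2) (intro add_nonneg_nonneg; simp)
          show ?thesis using np by (simp add: sq[symmetric])
        qed
        finally show ?thesis by (simp add: norm_Pair)
      qed
      have "\<forall>j<N0. bounded (range (\<lambda>n. (pu n j, pv n j)))"
        using unitn by (auto simp: bounded_iff intro!: exI[of _ 1])
      then obtain \<sigma> Lm where \<sigma>: "strict_mono \<sigma>" and Lm: "\<forall>j<N0. (\<lambda>n. (pu (\<sigma> n) j, pv (\<sigma> n) j)) \<longlonglongrightarrow> Lm j"
        using subseq_finite[of N0 "\<lambda>n j. (pu n j, pv n j)"] by blast
      define U where "U j = fst (Lm j)" for j
      define V where "V j = snd (Lm j)" for j
      have puc: "(\<lambda>n. pu (\<sigma> n) j) \<longlonglongrightarrow> U j" if "j < N0" for j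
        using tendsto_fst[OF Lm[rule_format, OF that]] by (simp add: U_def)
      have pvc: "(\<lambda>n. pv (\<sigma> n) j) \<longlonglongrightarrow> V j" if "j < N0" for j
        using tendsto_snd[OF Lm[rule_format, OF that]] by (simp add: V_def)
      have unitU: "norm (U j)^2 + (V j)^2 = 1" if "j < N0" for j
      proof -
        have "(\<lambda>n. norm (pu (\<sigma> n) j, pv (\<sigma> n) j)) \<longlonglongrightarrow> norm (Lm j)"
          using Lm that by (intro tendsto_intros) auto
        then have "norm (Lm j) = 1" using unitn LIMSEQ_unique[OF _ tendsto_const] by simp
        moreover have "Lm j = (U j, V j)" by (simp add: U_def V_def)
        ultimately have "sqrt (norm (U j)^2 + (norm (V j))^2) = 1" by (simp add: norm_Pair)
        then show ?thesis by simp
      qed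
      have convS: "(\<lambda>n. (\<Sum>j<N0. cc (\<sigma> n) j * pReLU a (pu (\<sigma> n) j \<bullet> x + pv (\<sigma> n) j)) + b2 (\<sigma> n)) \<longlonglongrightarrow> g x"
        if x: "x \<in> cube B" for x
      proof -
        have "(\<lambda>n. f (\<sigma> n) x) \<longlonglongrightarrow> g x" using LIMSEQ_subseq_LIMSEQ[OF pw[OF x] \<sigma>] by (simp add: comp_def)
        then show ?thesis using Fn[OF x] by simp
      qed
      interpret S: setting a B N0 "\<lambda>n. cc (\<sigma> n)" "\<lambda>n. pu (\<sigma> n)" "\<lambda>n. pv (\<sigma> n)" "\<lambda>n. b2 (\<sigma> n)" g U V
        by unfold_locales (use Bp ap a1 convS gcont puc pvc unitU in auto)
      show ?thesis
      proof (cases "S.R = {..<N0}")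
        case True
        have crossj: "S.crossing j" if "j < N0" for j using True that by (auto simp: S.R_def)
        have distinct: "k = j" if "j < N0" "k < N0" "S.same j k" for j k
        proof (rule ccontr)
          assume "k \<noteq> j"
          then have "k < j \<or> j < k" by auto
          then show False
          proof
            assume "k < j" then show False using True that by (auto simp: S.R_def)
          next
            assume "j < k"
            have "S.same k j" using S.same_sym that(3) .
            then show False using True that \<open>j < k\<close> by (auto simp: S.R_def)
          qed
        qed
        have clsj: "S.cls j = {j}" if "j < N0" for j
          using distinct[OF that] that by (auto simp: S.cls_def S.same_refl)
        have cconv: "(\<lambda>n. cc (\<sigma> n) j) \<longlonglongrightarrow> S.lam j" if j: "j < N0" for j
        proof -
          have Uj: "U j \<noteq> 0" using S.Unz[OF j crossj[OF j]] .
          then have UU: "U j \<bullet> U j \<noteq> 0" by simp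
          have l1: "(\<lambda>n. cc (\<sigma> n) j * \<bar>pu (\<sigma> n) j \<bullet> U j\<bar>) \<longlonglongrightarrow> S.lam j * \<bar>U j \<bullet> U j\<bar>"
            using S.lam_prop[OF j crossj[OF j] UU] by (simp add: clsj[OF j])
          have l2: "(\<lambda>n. \<bar>pu (\<sigma> n) j \<bullet> U j\<bar>) \<longlonglongrightarrow> \<bar>U j \<bullet> U j\<bar>" by (intro tendsto_intros puc j)
          have l3: "(\<lambda>n. (cc (\<sigma> n) j * \<bar>pu (\<sigma> n) j \<bullet> U j\<bar>) / \<bar>pu (\<sigma> n) j \<bullet> U j\<bar>) \<longlonglongrightarrow> (S.lam j * \<bar>U j \<bullet> U j\<bar>) / \<bar>U j \<bullet> U j\<bar>"
            using UU by (intro tendsto_divide l1 l2) simp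
          have ev: "eventually (\<lambda>n. \<bar>pu (\<sigma> n) j \<bullet> U j\<bar> \<noteq> 0) sequentially"
            using tendsto_imp_eventually_ne[OF l2, of 0] UU by simp
          have "eventually (\<lambda>n. (cc (\<sigma> n) j * \<bar>pu (\<sigma> n) j \<bullet> U j\<bar>) / \<bar>pu (\<sigma> n) j \<bullet> U j\<bar> = cc (\<sigma> n) j) sequentially"
            using ev by eventually_elim simp
          from Lim_transform_eventually[OF l3 this] show ?thesis using UU by simp
        qed
        define E where "E = g 0 - (\<Sum>j<N0. S.lam j * pReLU a (U j \<bullet> 0 + V j))"
        have sumconv: "(\<lambda>n. \<Sum>j<N0. cc (\<sigma> n) j * pReLU a (pu (\<sigma> n) j \<bullet> x + pv (\<sigma> n) j)) \<longlonglongrightarrow>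
                       (\<Sum>j<N0. S.lam j * pReLU a (U j \<bullet> x + V j))" for x
          by (intro tendsto_intros cconv puc pvc) auto
        have b2c: "(\<lambda>n. b2 (\<sigma> n)) \<longlonglongrightarrow> E"
        proof -
          have "(\<lambda>n. ((\<Sum>j<N0. cc (\<sigma> n) j * pReLU a (pu (\<sigma> n) j \<bullet> 0 + pv (\<sigma> n) j)) + b2 (\<sigma> n))
                  - (\<Sum>j<N0. cc (\<sigma> n) j * pReLU a (pu (\<sigma> n) j \<bullet> 0 + pv (\<sigma> n) j))) \<longlonglongrightarrow> g 0 - (\<Sum>j<N0. S.lam j * pReLU a (U j \<bullet> 0 + V j))"
            by (intro tendsto_diff convS zc sumconv)
          then show ?thesis by (simp add: E_def)
        qed
        have gfin: "g x = (\<Sum>j<N0. S.lam j * pReLU a (U j \<bullet> x + V j)) + E" if x: "x \<in> cube B" for x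
        proof -
          have "(\<lambda>n. (\<Sum>j<N0. cc (\<sigma> n) j * pReLU a (pu (\<sigma> n) j \<bullet> x + pv (\<sigma> n) j)) + b2 (\<sigma> n)) \<longlonglongrightarrow>
                (\<Sum>j<N0. S.lam j * pReLU a (U j \<bullet> x + V j)) + E"
            by (intro tendsto_add sumconv b2c)
          then show ?thesis using convS[OF x] LIMSEQ_unique by blast
        qed
        show ?thesis unfolding RNN_shallow_def mem_Collect_eq
          apply (rule exI[of _ U], rule exI[of _ V], rule exI[of _ S.lam], rule exI[of _ E])
          using gfin by simp
      next
        case False
        then obtain j0 where j0: "j0 < N0" "j0 \<notin> S.R" using S.R_sub by blast
        obtain w b where wb: "\<forall>x\<in>cube B. g x = w \<bullet> x + b + S.be * (\<Sum>r\<in>S.R. S.lam r * relu (S.L r x))"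
          using S.decomp by blast
        have finR: "finite S.R" using S.R_sub finite_subset by blast
        define w' where "w' = w - S.al *\<^sub>R (\<Sum>r\<in>S.R. S.lam r *\<^sub>R U r)"
        define b' where "b' = b - S.al * (\<Sum>r\<in>S.R. S.lam r * V r)"
        define T where "T = (\<Sum>i\<in>UNIV. \<bar>w' $ i\<bar> * B)"
        define A1' where "A1' j = (if j \<in> S.R then U j else if j = j0 then w' else 0)" for j
        define b1' where "b1' j = (if j \<in> S.R then V j else if j = j0 then T else 0)" for j
        define A2' where "A2' j = (if j \<in> S.R then S.lam j else if j = j0 then 1 / max 1 a else 0)" for j
        have gfin: "g x = (\<Sum>j<N0. A2' j * pReLU a (A1' j \<bullet> x + b1' j)) + (b' - T)" if x: "x \<in> cube B" for x
        proof -
          have relu_eq: "S.be * relu y = pReLU a y - S.al * y" for y using S.rho[of y] by simp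
          have "S.be * (\<Sum>r\<in>S.R. S.lam r * relu (S.L r x)) = (\<Sum>r\<in>S.R. S.lam r * (S.be * relu (S.L r x)))"
            by (simp add: sum_distrib_left algebra_simps)
          also have "\<dots> = (\<Sum>r\<in>S.R. S.lam r * pReLU a (U r \<bullet> x + V r)) - S.al * (\<Sum>r\<in>S.R. S.lam r * (U r \<bullet> x + V r))"
            by (simp add: relu_eq S.L_def right_diff_distrib sum_subtractf sum_distrib_left algebra_simps)
          also have "(\<Sum>r\<in>S.R. S.lam r * (U r \<bullet> x + V r)) = (\<Sum>r\<in>S.R. S.lam r *\<^sub>R U r) \<bullet> x + (\<Sum>r\<in>S.R. S.lam r * V r)"
            by (simp add: inner_sum_left sum.distrib distrib_left)
          finally have e1: "S.be * (\<Sum>r\<in>S.R. S.lam r * relu (S.L r x)) =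
              (\<Sum>r\<in>S.R. S.lam r * pReLU a (U r \<bullet> x + V r)) - S.al * ((\<Sum>r\<in>S.R. S.lam r *\<^sub>R U r) \<bullet> x + (\<Sum>r\<in>S.R. S.lam r * V r))" .
          have gx: "g x = (\<Sum>r\<in>S.R. S.lam r * pReLU a (U r \<bullet> x + V r)) + (w' \<bullet> x + b')"
            using wb x e1 by (simp add: w'_def b'_def inner_diff_left algebra_simps)
          have Tpos: "w' \<bullet> x + T \<ge> 0" using inner_bound[OF x, of w'] by (simp add: T_def abs_le_iff)
          have maxpos: "max 1 a > 0" by simp
          have aff: "(1 / max 1 a) * pReLU a (w' \<bullet> x + T) = w' \<bullet> x + T"
            using pReLU_pos[OF ap Tpos] maxpos by simp
          have "(\<Sum>j<N0. A2' j * pReLU a (A1' j \<bullet> x + b1' j)) =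
                (\<Sum>j<N0. (if j \<in> S.R then S.lam j * pReLU a (U j \<bullet> x + V j) else 0) +
                          (if j = j0 then (1 / max 1 a) * pReLU a (w' \<bullet> x + T) else 0))"
            by (rule sum.cong) (use j0 in \<open>auto simp: A1'_def b1'_def A2'_def\<close>)
          also have "\<dots> = (\<Sum>r\<in>S.R. S.lam r * pReLU a (U r \<bullet> x + V r)) + (w' \<bullet> x + T)"
          proof -
            have "(\<Sum>j<N0. (if j \<in> S.R then S.lam j * pReLU a (U j \<bullet> x + V j) else 0)) =
                  (\<Sum>j\<in>{..<N0} \<inter> S.R. S.lam j * pReLU a (U j \<bullet> x + V j))"
              by (simp add: sum.inter_restrict)
            also have "{..<N0} \<inter> S.R = S.R" using S.R_sub by blast
            finally have 1: "(\<Sum>j<N0. (if j \<in> S.R then S.lam j * pReLU a (U j \<bullet> x + V j) else 0)) =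
                  (\<Sum>r\<in>S.R. S.lam r * pReLU a (U r \<bullet> x + V r))" .
            have 2: "(\<Sum>j<N0. (if j = j0 then (1 / max 1 a) * pReLU a (w' \<bullet> x + T) else 0)) = w' \<bullet> x + T"
              using j0(1) aff by (subst sum.delta) simp_all
            show ?thesis using 1 2 by (simp add: sum.distrib)
          qed
          finally show ?thesis using gx by simp
        qed
        show ?thesis unfolding RNN_shallow_def mem_Collect_eq
          apply (rule exI[of _ A1'], rule exI[of _ b1'], rule exI[of _ A2'], rule exI[of _ "b' - T"])
          using gfin by simp
      qed
    qed
  qed
qed


end
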